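(* Let $a,b>-2$ and let $N\ge2$ be even. For $j\ge0$ put $$\varphi_j^{(1)}(x)=\frac{P_j^{(a+1,b+1)}(x)}{\sqrt{h_j^{(a+1,b+1)}}}(1-x)^{a/2}(1+x)^{b/2},\qquad x\in(-1,1),$$ and define $\psi_{2j}^{(1)}(x)=\varphi_{2j}^{(1)}(x)$, $\psi_{2j+1}^{(1)}(x)=\frac{d}{dx}\big[(1-x^2)\varphi_{2j}^{(1)}(x)\big]$. Let $M^{(1)}$ be the $N\times N$ matrix with entries $M^{(1)}_{jk}=\int_{-1}^1\psi_j^{(1)}(x)\,\varepsilon\psi_k^{(1)}(x)\,dx$, $j,k=0,\ldots,N-1$, let $(\nu_{jk})_{j,k=0}^{N-1}=(M^{(1)})^{-1}$, and $$K_N^{(1)}(x,y)=\sum_{j,k=0}^{N-1}\nu_{jk}\,\varepsilon\psi_j^{(1)}(x)\,\psi_k^{(1)}(y).$$ Then $$K_N^{(1)}(x,y)=S_N^{(1)}(x,y)+C_N^{(1)}\,\varepsilon\varphi_N^{(1)}(x)\,\varphi_{N-1}^{(1)}(y),$$ where $$C_N^{(1)}=\sqrt{\frac{N(N+a+1)(N+b+1)(N+a+b+2)}{(2N+a+b+1)(2N+a+b+3)}},\qquad S_N^{(1)}(x,y)=\sum_{j=0}^{N-1}(1-x^2)\varphi_j^{(1)}(x)\varphi_j^{(1)}(y).$$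
   Context: $P_j^{(\alpha,\beta)}$ is the Jacobi polynomial of degree $j$ (Szegő normalization) with $\int_{-1}^1P_j^{(\alpha,\beta)}P_k^{(\alpha,\beta)}(1-x)^{\alpha}(1+x)^{\beta}dx=h_j^{(\alpha,\beta)}\delta_{jk}$, $h_j^{(\alpha,\beta)}=\frac{2^{\alpha+\beta+1}\Gamma(j+\alpha+1)\Gamma(j+\beta+1)}{j!(2j+\alpha+\beta+1)\Gamma(j+\alpha+\beta+1)}$. The operator $\varepsilon$ acts on integrable $g$ on $[-1,1]$ by $\varepsilon g(x)=\int_{-1}^1\frac12\mathrm{sgn}(x-y)g(y)dy=\frac12\left(\int_{-1}^x g(y)dy-\int_x^1 g(y)dy\right)$. *)

theory Defs
  imports "HOL-Analysis.Analysis"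
begin

text \<open>Jacobi polynomial, Szego normalization (explicit sum, DLMF 18.5.8).\<close>
definition jacobiP :: "nat \<Rightarrow> real \<Rightarrow> real \<Rightarrow> real \<Rightarrow> real" where
  "jacobiP n \<alpha> \<beta> x =
     (\<Sum>s\<le>n. ((real n + \<alpha>) gchoose (n - s)) * ((real n + \<beta>) gchoose s)
              * ((x - 1) / 2) ^ s * ((x + 1) / 2) ^ (n - s))"

definition jacobi_weight :: "real \<Rightarrow> real \<Rightarrow> real \<Rightarrow> real" where
  "jacobi_weight \<alpha> \<beta> x = (1 - x) powr \<alpha> * (1 + x) powr \<beta>"

definition jacobi_h :: "nat \<Rightarrow> real \<Rightarrow> real \<Rightarrow> real" where
  "jacobi_h j \<alpha> \<beta> = integral {-1..1} (\<lambda>x. (jacobiP j \<alpha> \<beta> x)^2 * jacobi_weight \<alpha> \<beta> x)"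

definition eps_op :: "(real \<Rightarrow> real) \<Rightarrow> real \<Rightarrow> real" where
  "eps_op g x = integral {-1..1} (\<lambda>y. (1/2) * sgn (x - y) * g y)"

definition phi1 :: "real \<Rightarrow> real \<Rightarrow> nat \<Rightarrow> real \<Rightarrow> real" where
  "phi1 a b j x = jacobiP j (a + 1) (b + 1) x / sqrt (jacobi_h j (a + 1) (b + 1))
                    * (1 - x) powr (a / 2) * (1 + x) powr (b / 2)"

definition psi1 :: "real \<Rightarrow> real \<Rightarrow> nat \<Rightarrow> real \<Rightarrow> real" where
  "psi1 a b j x = (if even j then phi1 a b j x
                   else deriv (\<lambda>t. (1 - t^2) * phi1 a b (j - 1) t) x)"

definition M1 :: "real \<Rightarrow> real \<Rightarrow> nat \<Rightarrow> nat \<Rightarrow> real" where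
  "M1 a b j k = integral {-1..1} (\<lambda>x. psi1 a b j x * eps_op (psi1 a b k) x)"

definition is_inverse_mat :: "nat \<Rightarrow> (nat \<Rightarrow> nat \<Rightarrow> real) \<Rightarrow> (nat \<Rightarrow> nat \<Rightarrow> real) \<Rightarrow> bool" where
  "is_inverse_mat N M \<nu> \<longleftrightarrow>
     (\<forall>j<N. \<forall>k<N. (\<Sum>l<N. M j l * \<nu> l k) = (if j = k then 1 else 0)) \<and>
     (\<forall>j<N. \<forall>k<N. (\<Sum>l<N. \<nu> j l * M l k) = (if j = k then 1 else 0))"

definition K1 :: "real \<Rightarrow> real \<Rightarrow> nat \<Rightarrow> (nat \<Rightarrow> nat \<Rightarrow> real) \<Rightarrow> real \<Rightarrow> real \<Rightarrow> real" where
  "K1 a b N \<nu> x y = (\<Sum>j<N. \<Sum>k<N. \<nu> j k * eps_op (psi1 a b j) x * psi1 a b k y)"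

definition S1 :: "real \<Rightarrow> real \<Rightarrow> nat \<Rightarrow> real \<Rightarrow> real \<Rightarrow> real" where
  "S1 a b N x y = (\<Sum>j<N. (1 - x^2) * phi1 a b j x * phi1 a b j y)"

definition C1 :: "real \<Rightarrow> real \<Rightarrow> nat \<Rightarrow> real" where
  "C1 a b N = sqrt (real N * (real N + a + 1) * (real N + b + 1) * (real N + a + b + 2)
                    / ((2 * real N + a + b + 1) * (2 * real N + a + b + 3)))"

end

theory Submission
  imports Defs
begin
definition Hf :: "nat \<Rightarrow> (int \<Rightarrow> real) \<Rightarrow> real \<Rightarrow> real" where
  "Hf n f x = (\<Sum>s\<le>n. f (int s) * ((x-1)/2)^s * ((x+1)/2)^(n-s))"

definition Hfd :: "nat \<Rightarrow> (int \<Rightarrow> real) \<Rightarrow> real \<Rightarrow> real" where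
  "Hfd n f x = (\<Sum>s\<le>n. f (int s) * ((real s * ((x-1)/2)^(s-1) * ((x+1)/2)^(n-s)
        + real (n-s) * ((x-1)/2)^s * ((x+1)/2)^(n-s-1)) / 2))"

lemma term_deriv: "((\<lambda>x. ((x-1)/2)^s * ((x+1)/2)^k) has_real_derivative
   (real s * ((x-1)/2)^(s-1) * ((x+1)/2)^k + real k * ((x-1)/2)^s * ((x+1)/2)^(k-1)) / 2) (at x)"
proof -
  have d1: "((\<lambda>x. (x-1)/2) has_real_derivative 1/2) (at x)"
    by (auto intro!: derivative_eq_intros)
  have d2: "((\<lambda>x. (x+1)/2) has_real_derivative 1/2) (at x)"
    by (auto intro!: derivative_eq_intros)
  have "((\<lambda>x. ((x-1)/2)^s * ((x+1)/2)^k) has_real_derivative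
    (of_nat s * (1/2 * ((x-1)/2)^(s - Suc 0))) * ((x+1)/2)^k + (of_nat k * (1/2 * ((x+1)/2)^(k - Suc 0))) * ((x-1)/2)^s) (at x)"
    by (intro DERIV_mult DERIV_power d1 d2)
  then show ?thesis by (simp add: algebra_simps add_divide_distrib)
qed

lemma Hf_deriv: "((Hf n f) has_real_derivative Hfd n f x) (at x)"
proof -
  have "((\<lambda>x. \<Sum>s\<le>n. f (int s) * (((x-1)/2)^s * ((x+1)/2)^(n-s))) has_real_derivative
     (\<Sum>s\<le>n. f (int s) * ((real s * ((x-1)/2)^(s-1) * ((x+1)/2)^(n-s)
        + real (n-s) * ((x-1)/2)^s * ((x+1)/2)^(n-s-1)) / 2))) (at x)"
    by (intro DERIV_sum DERIV_cmult term_deriv)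
  then show ?thesis unfolding Hf_def[abs_def] Hfd_def by (simp add: mult.assoc)
qed

lemma Hf_cong: "(\<And>t. 0 \<le> t \<Longrightarrow> t \<le> int n \<Longrightarrow> f t = g t) \<Longrightarrow> Hf n f x = Hf n g x"
  unfolding Hf_def by (intro sum.cong) auto

lemma Hf_add: "Hf n (\<lambda>t. f t + g t) x = Hf n f x + Hf n g x"
  unfolding Hf_def by (simp add: sum.distrib algebra_simps)

lemma Hf_scale: "Hf n (\<lambda>t. c * f t) x = c * Hf n f x"
  unfolding Hf_def by (simp add: sum_distrib_left algebra_simps)

lemma Hf_mul_u: assumes "f (-1) = 0"
  shows "(x-1)/2 * Hf n f x = Hf (n+1) (\<lambda>t. f (t-1)) x"
proof -
  have "Hf (n+1) (\<lambda>t. f (t-1)) x = (\<Sum>s\<le>Suc n. f (int s - 1) * ((x-1)/2)^s * ((x+1)/2)^(Suc n-s))"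
    unfolding Hf_def by simp
  also have "\<dots> = (\<Sum>s\<le>n. f (int (Suc s) - 1) * ((x-1)/2)^(Suc s) * ((x+1)/2)^(Suc n- Suc s)) + f (-1) * ((x+1)/2)^(Suc n)"
    by (subst sum.atMost_Suc_shift) simp
  also have "\<dots> = (x-1)/2 * Hf n f x"
    unfolding Hf_def using assms by (simp add: sum_distrib_left algebra_simps)
  finally show ?thesis by simp
qed

lemma Hf_mul_v: assumes "f (int n + 1) = 0"
  shows "(x+1)/2 * Hf n f x = Hf (n+1) f x"
proof -
  have "Hf (n+1) f x = (\<Sum>s\<le>n. f (int s) * ((x-1)/2)^s * ((x+1)/2)^(Suc n-s)) + f (int n + 1) * ((x-1)/2)^(Suc n)"
    unfolding Hf_def by (simp add: add_ac)
  also have "\<dots> = (x+1)/2 * Hf n f x"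
    unfolding Hf_def using assms
    by (simp add: sum_distrib_left algebra_simps Suc_diff_le)
  finally show ?thesis by simp
qed

lemma aux_distr: "(c::real) * ((A + B)/2) = c*A/2 + c*B/2" by algebra

lemma Hfd_Hf: "Hfd (Suc m) f x = Hf m (\<lambda>t. (of_int (t+1) * f (t+1) + (real (Suc m) - of_int t) * f t)/2) x"
proof -
  let ?u = "(x-1)/2" and ?v = "(x+1)/2"
  have "Hfd (Suc m) f x = (\<Sum>s\<le>Suc m. f (int s) * (real s * ?u^(s-1) * ?v^(Suc m-s))/2)
      + (\<Sum>s\<le>Suc m. f (int s) * (real (Suc m - s) * ?u^s * ?v^(Suc m-s-1))/2)"
    unfolding Hfd_def aux_distr by (rule sum.distrib)
  also have "(\<Sum>s\<le>Suc m. f (int s) * (real s * ?u^(s-1) * ?v^(Suc m-s))/2)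
     = (\<Sum>s\<le>m. f (int s + 1) * real (Suc s) * ?u^s * ?v^(m-s) / 2)"
    by (subst sum.atMost_Suc_shift) (simp add: add_ac mult.assoc)
  also have "(\<Sum>s\<le>Suc m. f (int s) * (real (Suc m - s) * ?u^s * ?v^(Suc m-s-1))/2)
     = (\<Sum>s\<le>m. f (int s) * real (Suc m - s) * ?u^s * ?v^(m-s) / 2)"
    by (simp add: mult.assoc)
  also have "(\<Sum>s\<le>m. f (int s + 1) * real (Suc s) * ?u^s * ?v^(m-s) / 2) +
     (\<Sum>s\<le>m. f (int s) * real (Suc m - s) * ?u^s * ?v^(m-s) / 2) =
     (\<Sum>s\<le>m. (f (int s + 1) * real (Suc s) + f (int s) * real (Suc m - s)) / 2 * ?u^s * ?v^(m-s))"
    unfolding sum.distrib[symmetric] by (intro sum.cong refl) (simp add: field_simps)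
  also have "\<dots> = Hf m (\<lambda>t. (of_int (t+1) * f (t+1) + (real (Suc m) - of_int t) * f t)/2) x"
    unfolding Hf_def by (intro sum.cong refl) (simp add: of_nat_diff algebra_simps)
  finally show ?thesis .
qed

lemma Hfd_0: "Hfd 0 f x = 0"
  unfolding Hfd_def by simp

lemma Hfd_omega:
  assumes f1: "f (-1) = 0" and f2: "f (int n + 1) = 0"
  shows "(1 - x^2) * Hfd n f x = Hf (n+1) (\<lambda>t. -2 * (of_int t * f t + (real n + 1 - of_int t) * f (t-1))) x"
proof (cases n)
  case 0
  then show ?thesis using f1 f2 by (simp add: Hfd_0 Hf_def)
next
  case (Suc m)
  define g where "g = (\<lambda>t. (of_int (t+1) * f (t+1) + (real (Suc m) - of_int t) * f t)/2)"
  have g1: "g (int m + 1) = 0" using f2 Suc by (simp add: g_def add_ac)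
  have g2: "g (-1) = 0" using f1 by (simp add: g_def)
  have "(1 - x^2) * Hfd n f x = (1 - x^2) * Hf m g x"
    unfolding Suc Hfd_Hf g_def by simp
  also have "\<dots> = -4 * ((x-1)/2 * ((x+1)/2 * Hf m g x))"
    by (simp add: power2_eq_square field_simps)
  also have "\<dots> = -4 * Hf (m+2) (\<lambda>t. g (t-1)) x"
    using Hf_mul_v[where f=g and n=m and x=x, OF g1] Hf_mul_u[where f=g and n="m+1" and x=x, OF g2] by simp
  also have "\<dots> = Hf (n+1) (\<lambda>t. -2 * (of_int t * f t + (real n + 1 - of_int t) * f (t-1))) x"
    unfolding Suc Hf_scale[symmetric] by (simp add: numeral_2_eq_2, intro Hf_cong) (simp add: g_def field_simps)
  finally show ?thesis .
qed

lemma Hf_lift: assumes "f (-1) = 0" "f (int n + 1) = 0"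
  shows "Hf n f x = Hf (n+1) (\<lambda>t. f t - f (t-1)) x"
proof -
  have "Hf n f x = (x+1)/2 * Hf n f x - (x-1)/2 * Hf n f x" by (simp add: field_simps)
  also have "\<dots> = Hf (n+1) f x + (-1) * Hf (n+1) (\<lambda>t. f (t-1)) x"
    using Hf_mul_u[where f=f and n=n and x=x] Hf_mul_v[where f=f and n=n and x=x] assms by simp
  also have "\<dots> = Hf (n+1) (\<lambda>t. f t - f (t-1)) x"
    by (simp add: Hf_scale[symmetric] Hf_add[symmetric])
  finally show ?thesis .
qed

lemma Hf_mul_lin: assumes "f (-1) = 0" "f (int n + 1) = 0"
  shows "(p * ((x+1)/2) + q * ((x-1)/2)) * Hf n f x = Hf (n+1) (\<lambda>t. p * f t + q * f (t-1)) x"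
proof -
  have "(p * ((x+1)/2) + q * ((x-1)/2)) * Hf n f x = p * ((x+1)/2 * Hf n f x) + q * ((x-1)/2 * Hf n f x)"
    by (simp add: algebra_simps)
  also have "\<dots> = Hf (n+1) (\<lambda>t. p * f t + q * f (t-1)) x"
    using Hf_mul_u[where f=f and n=n and x=x] Hf_mul_v[where f=f and n=n and x=x] assms
    by (simp add: Hf_scale[symmetric] Hf_add[symmetric])
  finally show ?thesis .
qed

definition jc :: "nat \<Rightarrow> real \<Rightarrow> real \<Rightarrow> int \<Rightarrow> real" where
  "jc n \<alpha> \<beta> t = Gamma (real n + \<alpha> + 1) * Gamma (real n + \<beta> + 1) * rGamma (real_of_int t + \<alpha> + 1)
     * rGamma (real n - real_of_int t + \<beta> + 1) * rGamma (real_of_int t + 1) * rGamma (real n - real_of_int t + 1)"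

lemma rG_step: "y = x + 1 \<Longrightarrow> c = x \<Longrightarrow> rGamma x = c * rGamma (y::real)"
  using rGamma_plus1[of x] by simp

lemma rG_eq: "x = y \<Longrightarrow> rGamma x = rGamma (y::real)" by simp
lemma G_eq: "x = y \<Longrightarrow> Gamma x = Gamma (y::real)" by simp

lemma jc_m1: "jc n \<alpha> \<beta> (-1) = 0"
  unfolding jc_def by (simp add: rGamma_eq_zero_iff)

lemma jc_top: "jc n \<alpha> \<beta> (int n + 1) = 0"
  unfolding jc_def by (simp add: rGamma_eq_zero_iff)

lemma pos_not_nonpos_Ints: "(x::real) > 0 \<Longrightarrow> x \<notin> \<int>\<^sub>\<le>\<^sub>0"
  using nonpos_Ints_nonpos by force

lemma gchoose_rG: assumes "(z::real) - real k + 1 > 0"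
  shows "(z gchoose k) = Gamma (z + 1) * rGamma (real k + 1) * rGamma (z - real k + 1)"
proof -
  have "z + 1 > 0" using assms by simp
  then have "(z gchoose k) = Gamma (z + 1) / (fact k * Gamma (z - of_nat k + 1))"
    by (intro gbinomial_Gamma pos_not_nonpos_Ints)
  also have "fact k = Gamma (real k + 1)" using Gamma_fact[of k, where 'a=real] by (simp add: add_ac)
  finally show ?thesis by (simp add: rGamma_inverse_Gamma field_simps)
qed

lemma jacobiP_Hf: assumes "\<alpha> > -1" "\<beta> > -1"
  shows "jacobiP n \<alpha> \<beta> x = Hf n (jc n \<alpha> \<beta>) x"
  unfolding jacobiP_def Hf_def
proof (intro sum.cong refl)
  fix s assume s: "s \<in> {..n}"
  have "((real n + \<alpha>) gchoose (n - s)) = Gamma (real n + \<alpha> + 1) * rGamma (real n - real s + 1) * rGamma (real s + \<alpha> + 1)"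
    using s assms by (subst gchoose_rG) (auto simp: of_nat_diff algebra_simps)
  moreover have "((real n + \<beta>) gchoose s) = Gamma (real n + \<beta> + 1) * rGamma (real s + 1) * rGamma (real n - real s + \<beta> + 1)"
    using s assms by (subst gchoose_rG) (auto simp: of_nat_diff algebra_simps)
  ultimately show "((real n + \<alpha>) gchoose (n - s)) * ((real n + \<beta>) gchoose s) * ((x - 1) / 2) ^ s * ((x + 1) / 2) ^ (n - s) =
         jc n \<alpha> \<beta> (int s) * ((x - 1) / 2) ^ s * ((x + 1) / 2) ^ (n - s)"
    unfolding jc_def by simp
qed

lemma coef_D: "(real_of_int (t+1) * jc (Suc m) \<alpha> \<beta> (t+1) + (real (Suc m) - real_of_int t) * jc (Suc m) \<alpha> \<beta> t)/2
   = (real (Suc m) + \<alpha> + \<beta> + 1)/2 * jc m (\<alpha>+1) (\<beta>+1) t"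
proof -
  have e: "Gamma (real (Suc m) + \<alpha> + 1) = Gamma (real m + \<alpha> + 2)"
     "Gamma (real m + (\<alpha>+1) + 1) = Gamma (real m + \<alpha> + 2)"
     "Gamma (real (Suc m) + \<beta> + 1) = Gamma (real m + \<beta> + 2)"
     "Gamma (real m + (\<beta>+1) + 1) = Gamma (real m + \<beta> + 2)"
     "rGamma (real_of_int (t+1) + \<alpha> + 1) = rGamma (real_of_int t + \<alpha> + 2)"
     "rGamma (real_of_int t + (\<alpha>+1) + 1) = rGamma (real_of_int t + \<alpha> + 2)"
     "rGamma (real (Suc m) - real_of_int (t+1) + \<beta> + 1) = (real m - real_of_int t + \<beta> + 1) * rGamma (real m - real_of_int t + \<beta> + 2)"
     "rGamma (real_of_int (t+1) + 1) = rGamma (real_of_int t + 2)"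
     "rGamma (real (Suc m) - real_of_int (t+1) + 1) = (real m - real_of_int t + 1) * rGamma (real m - real_of_int t + 2)"
     "rGamma (real_of_int t + \<alpha> + 1) = (real_of_int t + \<alpha> + 1) * rGamma (real_of_int t + \<alpha> + 2)"
     "rGamma (real (Suc m) - real_of_int t + \<beta> + 1) = rGamma (real m - real_of_int t + \<beta> + 2)"
     "rGamma (real_of_int t + 1) = (real_of_int t + 1) * rGamma (real_of_int t + 2)"
     "rGamma (real (Suc m) - real_of_int t + 1) = rGamma (real m - real_of_int t + 2)"
     "rGamma (real m - real_of_int t + (\<beta>+1) + 1) = rGamma (real m - real_of_int t + \<beta> + 2)"
     "rGamma (real m - real_of_int t + 1) = (real m - real_of_int t + 1) * rGamma (real m - real_of_int t + 2)"
    by (rule G_eq rG_eq rG_step; simp; fail)+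
  show ?thesis unfolding jc_def e by (simp add: field_simps; algebra)
qed

lemma rG_step2: assumes "y = x + 2" "c = x * (x + 1)" shows "rGamma x = c * rGamma (y::real)"
proof -
  have "rGamma x = x * rGamma (x+1)" using rGamma_plus1[of x] by simp
  also have "rGamma (x+1) = (x+1) * rGamma (x+1+1)" using rGamma_plus1[of "x+1"] by simp
  finally show ?thesis using assms by (simp add: add.assoc mult.assoc)
qed

lemma G_step: "x > 0 \<Longrightarrow> y = x + 1 \<Longrightarrow> c = x \<Longrightarrow> Gamma y = c * Gamma (x::real)"
  using Gamma_plus1[of x] pos_not_nonpos_Ints[of x] by simp

lemma G_step2: "x > 0 \<Longrightarrow> y = x + 2 \<Longrightarrow> c = (x + 1) * x \<Longrightarrow> Gamma y = c * Gamma (x::real)"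
  using Gamma_plus1[of x] Gamma_plus1[of "x+1"] pos_not_nonpos_Ints[of x] pos_not_nonpos_Ints[of "x+1"]
  by (simp add: add.assoc)

lemma jc_out: assumes "t < 0 \<or> t > int n" shows "jc n \<alpha> \<beta> t = 0"
proof -
  have "real_of_int t + 1 \<in> \<int>\<^sub>\<le>\<^sub>0 \<or> real n - real_of_int t + 1 \<in> \<int>\<^sub>\<le>\<^sub>0"
  proof (cases "t < 0")
    case True
    have "real_of_int t + 1 = of_int (t+1)" by simp
    moreover have "of_int (t+1) \<in> (\<int>\<^sub>\<le>\<^sub>0 :: real set)" using True by (intro nonpos_Ints_of_int) simp
    ultimately show ?thesis by simp
  next
    case False
    then have "t > int n" using assms by simp
    have "real n - real_of_int t + 1 = of_int (int n - t + 1)" by simp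
    moreover have "of_int (int n - t + 1) \<in> (\<int>\<^sub>\<le>\<^sub>0 :: real set)" using \<open>t > int n\<close> by (intro nonpos_Ints_of_int) simp
    ultimately show ?thesis by simp
  qed
  then show ?thesis unfolding jc_def by (auto simp: rGamma_eq_zero_iff)
qed

lemma coef_R: "(real_of_int t + \<alpha> + 1) * jc m (\<alpha>+1) (\<beta>+1) t + (real m + 1 - real_of_int t + \<beta> + 1) * jc m (\<alpha>+1) (\<beta>+1) (t-1)
   = (real m + 1) * jc (Suc m) \<alpha> \<beta> t"
proof -
  have e: "Gamma (real (Suc m) + \<alpha> + 1) = Gamma (real m + \<alpha> + 2)"
     "Gamma (real m + (\<alpha>+1) + 1) = Gamma (real m + \<alpha> + 2)"
     "Gamma (real (Suc m) + \<beta> + 1) = Gamma (real m + \<beta> + 2)"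
     "Gamma (real m + (\<beta>+1) + 1) = Gamma (real m + \<beta> + 2)"
     "rGamma (real_of_int t + (\<alpha>+1) + 1) = rGamma (real_of_int t + \<alpha> + 2)"
     "rGamma (real m - real_of_int t + (\<beta>+1) + 1) = (real m - real_of_int t + \<beta> + 2) * rGamma (real m - real_of_int t + \<beta> + 3)"
     "rGamma (real m - real_of_int t + 1) = (real m - real_of_int t + 1) * rGamma (real m - real_of_int t + 2)"
     "rGamma (real_of_int (t-1) + (\<alpha>+1) + 1) = (real_of_int t + \<alpha> + 1) * rGamma (real_of_int t + \<alpha> + 2)"
     "rGamma (real m - real_of_int (t-1) + (\<beta>+1) + 1) = rGamma (real m - real_of_int t + \<beta> + 3)"
     "rGamma (real_of_int (t-1) + 1) = real_of_int t * rGamma (real_of_int t + 1)"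
     "rGamma (real m - real_of_int (t-1) + 1) = rGamma (real m - real_of_int t + 2)"
     "rGamma (real_of_int t + \<alpha> + 1) = (real_of_int t + \<alpha> + 1) * rGamma (real_of_int t + \<alpha> + 2)"
     "rGamma (real (Suc m) - real_of_int t + \<beta> + 1) = (real m - real_of_int t + \<beta> + 2) * rGamma (real m - real_of_int t + \<beta> + 3)"
     "rGamma (real (Suc m) - real_of_int t + 1) = rGamma (real m - real_of_int t + 2)"
    by (rule G_eq rG_eq rG_step; simp; fail)+
  show ?thesis unfolding jc_def e by (simp add: field_simps; algebra)
qed

definition gam :: "real \<Rightarrow> real \<Rightarrow> nat \<Rightarrow> real" where
  "gam \<alpha> \<beta> j = (if j = 0 then 0 else (real j + \<alpha>) * (real j + \<beta>) / (2 * real j + \<alpha> + \<beta> + 1))"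
definition del :: "real \<Rightarrow> real \<Rightarrow> nat \<Rightarrow> real" where
  "del \<alpha> \<beta> j = (if j = 0 then 1 else (real j + 1) * (real j + \<alpha> + \<beta> + 1) / (2 * real j + \<alpha> + \<beta> + 1))"

lemma polyI2: fixes M T a b X :: real shows
 "(2*M+a+b+3)*(-2*(T*((M+a+1)*(M+b+1)*(M-T+b+2)*(M-T+2)*X)+(M+2-T)*((M+a+1)*(M+b+1)*(T+a)*T*X))
    -(a+1)*((M+a+1)*(M+b+1)*(M-T+b+2)*(M-T+2)*X)-(b+1)*((M+a+1)*(M+b+1)*(T+a)*T*X))
  = (M+1+a)*(M+1+b)*(((M-T+b+1)*(M-T+b+2)*(M-T+1)*(M-T+2)*X) - 2*((T+a)*(M-T+b+2)*T*(M-T+2)*X) + ((T+a-1)*(T+a)*(T-1)*T*X))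
    -(M+2)*(M+a+b+2)*((M+a+2)*(M+a+1)*(M+b+2)*(M+b+1)*X)"
  by algebra

lemma coef_I2: assumes "\<alpha> > -1" "\<beta> > -1"
  shows "(2 * real m + \<alpha> + \<beta> + 3) * (-2 * (real_of_int t * jc (Suc m) \<alpha> \<beta> t + (real m + 2 - real_of_int t) * jc (Suc m) \<alpha> \<beta> (t-1))
      - (\<alpha>+1) * jc (Suc m) \<alpha> \<beta> t - (\<beta>+1) * jc (Suc m) \<alpha> \<beta> (t-1))
   = (real m + 1 + \<alpha>) * (real m + 1 + \<beta>) * (jc m \<alpha> \<beta> t - 2 * jc m \<alpha> \<beta> (t-1) + jc m \<alpha> \<beta> (t-1-1))
     - (real m + 2) * (real m + \<alpha> + \<beta> + 2) * jc (Suc (Suc m)) \<alpha> \<beta> t"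
proof -
  have e: "Gamma (real (Suc m) + \<alpha> + 1) = (real m + \<alpha> + 1) * Gamma (real m + \<alpha> + 1)"
     "Gamma (real (Suc m) + \<beta> + 1) = (real m + \<beta> + 1) * Gamma (real m + \<beta> + 1)"
     "Gamma (real (Suc (Suc m)) + \<alpha> + 1) = (real m + \<alpha> + 2) * (real m + \<alpha> + 1) * Gamma (real m + \<alpha> + 1)"
     "Gamma (real (Suc (Suc m)) + \<beta> + 1) = (real m + \<beta> + 2) * (real m + \<beta> + 1) * Gamma (real m + \<beta> + 1)"
    by (rule G_step G_step2; insert assms; simp; fail)+
  have f: "rGamma (real (Suc m) - real_of_int t + \<beta> + 1) = (real m - real_of_int t + \<beta> + 2) * rGamma (real m - real_of_int t + \<beta> + 3)"
     "rGamma (real (Suc m) - real_of_int t + 1) = (real m - real_of_int t + 2) * rGamma (real m - real_of_int t + 3)"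
     "rGamma (real_of_int (t-1) + \<alpha> + 1) = (real_of_int t + \<alpha>) * rGamma (real_of_int t + \<alpha> + 1)"
     "rGamma (real (Suc m) - real_of_int (t-1) + \<beta> + 1) = rGamma (real m - real_of_int t + \<beta> + 3)"
     "rGamma (real_of_int (t-1) + 1) = real_of_int t * rGamma (real_of_int t + 1)"
     "rGamma (real (Suc m) - real_of_int (t-1) + 1) = rGamma (real m - real_of_int t + 3)"
     "rGamma (real m - real_of_int (t-1) + \<beta> + 1) = (real m - real_of_int t + \<beta> + 2) * rGamma (real m - real_of_int t + \<beta> + 3)"
     "rGamma (real m - real_of_int (t-1) + 1) = (real m - real_of_int t + 2) * rGamma (real m - real_of_int t + 3)"
     "rGamma (real m - real_of_int (t-1-1) + \<beta> + 1) = rGamma (real m - real_of_int t + \<beta> + 3)"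
     "rGamma (real m - real_of_int (t-1-1) + 1) = rGamma (real m - real_of_int t + 3)"
     "rGamma (real (Suc (Suc m)) - real_of_int t + \<beta> + 1) = rGamma (real m - real_of_int t + \<beta> + 3)"
     "rGamma (real (Suc (Suc m)) - real_of_int t + 1) = rGamma (real m - real_of_int t + 3)"
    by (rule rG_eq rG_step; simp; fail)+
  have g: "rGamma (real m - real_of_int t + \<beta> + 1) = ((real m - real_of_int t + \<beta> + 1) * (real m - real_of_int t + \<beta> + 2)) * rGamma (real m - real_of_int t + \<beta> + 3)"
     "rGamma (real m - real_of_int t + 1) = ((real m - real_of_int t + 1) * (real m - real_of_int t + 2)) * rGamma (real m - real_of_int t + 3)"
     "rGamma (real_of_int (t-1-1) + \<alpha> + 1) = ((real_of_int t + \<alpha> - 1) * (real_of_int t + \<alpha>)) * rGamma (real_of_int t + \<alpha> + 1)"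
     "rGamma (real_of_int (t-1-1) + 1) = ((real_of_int t - 1) * real_of_int t) * rGamma (real_of_int t + 1)"
    by (rule rG_step2; simp; fail)+
  define X where "X = (Gamma (real m + \<alpha> + 1) * Gamma (real m + \<beta> + 1) * rGamma (real_of_int t + \<alpha> + 1) * rGamma (real m - real_of_int t + \<beta> + 3) * rGamma (real_of_int t + 1) * rGamma (real m - real_of_int t + 3))"
  have q: "jc (Suc m) \<alpha> \<beta> t = (real m+\<alpha>+1)*(real m+\<beta>+1)*(real m-real_of_int t+\<beta>+2)*(real m-real_of_int t+2)*X"
     "jc (Suc m) \<alpha> \<beta> (t-1) = (real m+\<alpha>+1)*(real m+\<beta>+1)*(real_of_int t+\<alpha>)*real_of_int t*X"
     "jc m \<alpha> \<beta> t = (real m-real_of_int t+\<beta>+1)*(real m-real_of_int t+\<beta>+2)*(real m-real_of_int t+1)*(real m-real_of_int t+2)*X"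
     "jc m \<alpha> \<beta> (t-1) = (real_of_int t+\<alpha>)*(real m-real_of_int t+\<beta>+2)*real_of_int t*(real m-real_of_int t+2)*X"
     "jc m \<alpha> \<beta> (t-1-1) = (real_of_int t+\<alpha>-1)*(real_of_int t+\<alpha>)*(real_of_int t-1)*real_of_int t*X"
     "jc (Suc (Suc m)) \<alpha> \<beta> t = (real m+\<alpha>+2)*(real m+\<alpha>+1)*(real m+\<beta>+2)*(real m+\<beta>+1)*X"
    unfolding X_def jc_def e f g by (simp_all add: ac_simps)
  show ?thesis unfolding q by (rule polyI2)
qed

definition jd :: "nat \<Rightarrow> real \<Rightarrow> real \<Rightarrow> real \<Rightarrow> real" where
  "jd n \<alpha> \<beta> x = Hfd n (jc n \<alpha> \<beta>) x"

lemma jacobiP_eq: "\<alpha> > -1 \<Longrightarrow> \<beta> > -1 \<Longrightarrow> jacobiP n \<alpha> \<beta> = Hf n (jc n \<alpha> \<beta>)"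
  using jacobiP_Hf by blast

lemma jacobi_deriv: "\<alpha> > -1 \<Longrightarrow> \<beta> > -1 \<Longrightarrow> (jacobiP n \<alpha> \<beta> has_real_derivative jd n \<alpha> \<beta> x) (at x)"
  unfolding jd_def by (subst jacobiP_eq) (auto intro: Hf_deriv)

lemma jd_0: "jd 0 \<alpha> \<beta> x = 0"
  unfolding jd_def Hfd_0 ..

lemma jd_Suc: assumes "\<alpha> > -1" "\<beta> > -1"
  shows "jd (Suc m) \<alpha> \<beta> x = (real (Suc m) + \<alpha> + \<beta> + 1)/2 * jacobiP m (\<alpha>+1) (\<beta>+1) x"
proof -
  have "jd (Suc m) \<alpha> \<beta> x = Hf m (\<lambda>t. (real (Suc m) + \<alpha> + \<beta> + 1)/2 * jc m (\<alpha>+1) (\<beta>+1) t) x"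
    unfolding jd_def Hfd_Hf coef_D ..
  also have "\<dots> = (real (Suc m) + \<alpha> + \<beta> + 1)/2 * jacobiP m (\<alpha>+1) (\<beta>+1) x"
    unfolding Hf_scale using assms by (subst jacobiP_Hf) auto
  finally show ?thesis .
qed

lemma jacobi_R: assumes "\<alpha> > -1" "\<beta> > -1"
  shows "(1 - x^2) * jd m (\<alpha>+1) (\<beta>+1) x + ((\<beta>-\<alpha>) - (\<alpha>+\<beta>+2)*x) * jacobiP m (\<alpha>+1) (\<beta>+1) x
     = -2 * (real m + 1) * jacobiP (Suc m) \<alpha> \<beta> x"
proof -
  let ?q = "jc m (\<alpha>+1) (\<beta>+1)"
  have a1: "(1 - x^2) * jd m (\<alpha>+1) (\<beta>+1) x = Hf (m+1) (\<lambda>t. -2 * (of_int t * ?q t + (real m + 1 - of_int t) * ?q (t-1))) x"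
    unfolding jd_def by (rule Hfd_omega) (simp_all add: jc_m1 jc_top jc_out)
  have lin: "((\<beta>-\<alpha>) - (\<alpha>+\<beta>+2)*x) = (-2*(\<alpha>+1)) * ((x+1)/2) + (-2*(\<beta>+1)) * ((x-1)/2)"
    by (simp add: field_simps)
  have a2: "((\<beta>-\<alpha>) - (\<alpha>+\<beta>+2)*x) * jacobiP m (\<alpha>+1) (\<beta>+1) x = Hf (m+1) (\<lambda>t. (-2*(\<alpha>+1)) * ?q t + (-2*(\<beta>+1)) * ?q (t-1)) x"
  proof -
    have j: "jacobiP m (\<alpha>+1) (\<beta>+1) x = Hf m (jc m (\<alpha>+1) (\<beta>+1)) x" using assms by (intro jacobiP_Hf) auto
    show ?thesis unfolding lin j by (rule Hf_mul_lin) (simp_all add: jc_m1 jc_top jc_out)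
  qed
  have "(1 - x^2) * jd m (\<alpha>+1) (\<beta>+1) x + ((\<beta>-\<alpha>) - (\<alpha>+\<beta>+2)*x) * jacobiP m (\<alpha>+1) (\<beta>+1) x
     = Hf (m+1) (\<lambda>t. -2 * (real m + 1) * jc (Suc m) \<alpha> \<beta> t) x"
    unfolding a1 a2 Hf_add[symmetric]
  proof (rule Hf_cong)
    fix t :: int
    show "-2 * (of_int t * ?q t + (real m + 1 - of_int t) * ?q (t-1)) + ((-2*(\<alpha>+1)) * ?q t + (-2*(\<beta>+1)) * ?q (t-1))
      = -2 * (real m + 1) * jc (Suc m) \<alpha> \<beta> t"
      using coef_R[of t \<alpha> m \<beta>] by (simp add: algebra_simps)
  qed
  also have "\<dots> = -2 * (real m + 1) * jacobiP (Suc m) \<alpha> \<beta> x"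
    unfolding Hf_scale using assms by (subst jacobiP_Hf) auto
  finally show ?thesis .
qed

lemma jacobiP_0: "jacobiP 0 \<alpha> \<beta> x = 1"
  unfolding jacobiP_def by simp

lemma jacobiP_1: "jacobiP 1 \<alpha> \<beta> x = (1 + \<alpha>) * ((x+1)/2) + (1 + \<beta>) * ((x-1)/2)"
  unfolding jacobiP_def by (simp add: algebra_simps)

lemma jacobi_I2: assumes "\<alpha> > -1" "\<beta> > -1"
  shows "(1 - x^2) * jd j \<alpha> \<beta> x + ((\<beta>-\<alpha>)/2 - (\<alpha>+\<beta>+2)/2*x) * jacobiP j \<alpha> \<beta> x
     = gam \<alpha> \<beta> j * jacobiP (j-1) \<alpha> \<beta> x - del \<alpha> \<beta> j * jacobiP (j+1) \<alpha> \<beta> x"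
proof (cases j)
  case 0
  then show ?thesis using jacobiP_1[of \<alpha> \<beta> x]
    by (simp add: gam_def del_def field_simps jd_0 jacobiP_0)
next
  case (Suc m)
  let ?p = "jc (Suc m) \<alpha> \<beta>" and ?r = "jc m \<alpha> \<beta>" and ?s = "jc (Suc (Suc m)) \<alpha> \<beta>"
  have jP: "\<And>n. jacobiP n \<alpha> \<beta> x = Hf n (jc n \<alpha> \<beta>) x" using assms by (intro jacobiP_Hf) auto
  have a1: "(1 - x^2) * jd (Suc m) \<alpha> \<beta> x = Hf (Suc m + 1) (\<lambda>t. -2 * (of_int t * ?p t + (real (Suc m) + 1 - of_int t) * ?p (t-1))) x"
    unfolding jd_def by (rule Hfd_omega) (simp_all add: jc_m1 jc_top jc_out)
  have lin: "((\<beta>-\<alpha>)/2 - (\<alpha>+\<beta>+2)/2*x) = (-(\<alpha>+1)) * ((x+1)/2) + (-(\<beta>+1)) * ((x-1)/2)"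
    by (simp add: field_simps)
  have a2: "((\<beta>-\<alpha>)/2 - (\<alpha>+\<beta>+2)/2*x) * jacobiP (Suc m) \<alpha> \<beta> x = Hf (Suc m + 1) (\<lambda>t. (-(\<alpha>+1)) * ?p t + (-(\<beta>+1)) * ?p (t-1)) x"
    unfolding lin jP by (rule Hf_mul_lin) (simp_all add: jc_m1 jc_top jc_out)
  have r1: "Hf m ?r x = Hf (m+1) (\<lambda>t. ?r t - ?r (t-1)) x"
    by (rule Hf_lift) (simp_all add: jc_m1 jc_top jc_out)
  also have "\<dots> = Hf (m+1+1) (\<lambda>t. (?r t - ?r (t-1)) - (?r (t-1) - ?r (t-1-1))) x"
    by (rule Hf_lift) (simp_all add: jc_out)
  finally have r2: "jacobiP m \<alpha> \<beta> x = Hf (Suc m + 1) (\<lambda>t. ?r t - 2 * ?r (t-1) + ?r (t-1-1)) x"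
    unfolding jP by (simp add: algebra_simps)
  have D: "2 * real m + \<alpha> + \<beta> + 3 > 0" using assms by simp
  have "(1 - x^2) * jd j \<alpha> \<beta> x + ((\<beta>-\<alpha>)/2 - (\<alpha>+\<beta>+2)/2*x) * jacobiP j \<alpha> \<beta> x
     = Hf (Suc m + 1) (\<lambda>t. gam \<alpha> \<beta> j * (?r t - 2 * ?r (t-1) + ?r (t-1-1)) + (- del \<alpha> \<beta> j) * ?s t) x"
    unfolding Suc a1 a2 Hf_add[symmetric]
  proof (rule Hf_cong)
    fix t :: int
    show "-2 * (of_int t * ?p t + (real (Suc m) + 1 - of_int t) * ?p (t-1)) + ((-(\<alpha>+1)) * ?p t + (-(\<beta>+1)) * ?p (t-1))
      = gam \<alpha> \<beta> (Suc m) * (?r t - 2 * ?r (t-1) + ?r (t-1-1)) + (- del \<alpha> \<beta> (Suc m)) * ?s t"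
    proof -
      let ?A = "(real m + 1 + \<alpha>) * (real m + 1 + \<beta>)" and ?B = "(real m + 2) * (real m + \<alpha> + \<beta> + 2)"
        and ?D = "2 * real m + \<alpha> + \<beta> + 3"
      have g: "gam \<alpha> \<beta> (Suc m) = ?A / ?D" unfolding gam_def by (simp add: algebra_simps)
      have d: "del \<alpha> \<beta> (Suc m) = ?B / ?D" unfolding del_def by (simp add: algebra_simps)
      have l: "-2 * (of_int t * ?p t + (real (Suc m) + 1 - of_int t) * ?p (t-1)) + ((-(\<alpha>+1)) * ?p t + (-(\<beta>+1)) * ?p (t-1))
        = -2 * (real_of_int t * ?p t + (real m + 2 - real_of_int t) * ?p (t-1)) - (\<alpha>+1) * ?p t - (\<beta>+1) * ?p (t-1)"
        by (simp add: algebra_simps)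
      have gen: "\<And>D L A R B S :: real. D > 0 \<Longrightarrow> D * L = A * R - B * S \<Longrightarrow> L = A / D * R + (- (B / D)) * S"
        by (simp add: field_simps)
      show ?thesis unfolding l g d by (rule gen[OF D coef_I2[OF assms, of m t]])
    qed
  qed
  also have "\<dots> = gam \<alpha> \<beta> j * jacobiP (j-1) \<alpha> \<beta> x + (- del \<alpha> \<beta> j) * jacobiP (j+1) \<alpha> \<beta> x"
  proof -
    have "jacobiP (j-1) \<alpha> \<beta> x = Hf (Suc m + 1) (\<lambda>t. ?r t - 2 * ?r (t-1) + ?r (t-1-1)) x" using r2 Suc by simp
    moreover have "jacobiP (j+1) \<alpha> \<beta> x = Hf (Suc m + 1) ?s x" using jP Suc by simp
    ultimately show ?thesis unfolding Suc by (simp only: Hf_scale[symmetric] Hf_add[symmetric])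
  qed
  finally show ?thesis by simp
qed

definition wt :: "real \<Rightarrow> real \<Rightarrow> real \<Rightarrow> real" where
  "wt p q x = (1 - x) powr p * (1 + x) powr q"

lemma wt_deriv: assumes "x \<in> {-1<..<1}"
  shows "((wt (p+1) (q+1)) has_real_derivative wt p q x * ((q+1)*(1-x) - (p+1)*(1+x))) (at x)"
proof -
  have x: "1 - x > 0" "1 + x > 0" using assms by auto
  have d1: "((\<lambda>x. (1-x) powr (p+1)) has_real_derivative (p+1) * (1-x) powr (p+1-1) * (-1)) (at x)"
  proof -
    have "((\<lambda>x. 1 - x) has_real_derivative -1) (at x)" by (auto intro!: derivative_eq_intros)
    from DERIV_fun_powr[OF this, of "p+1"] x show ?thesis by simp
  qed
  have d2: "((\<lambda>x. (1+x) powr (q+1)) has_real_derivative (q+1) * (1+x) powr (q+1-1) * 1) (at x)"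
  proof -
    have "((\<lambda>x. 1 + x) has_real_derivative 1) (at x)" by (auto intro!: derivative_eq_intros)
    from DERIV_fun_powr[OF this, of "q+1"] x show ?thesis by simp
  qed
  have "((wt (p+1) (q+1)) has_real_derivative ((p+1) * (1-x) powr (p+1-1) * (-1)) * (1+x) powr (q+1) + ((q+1) * (1+x) powr (q+1-1) * 1) * (1-x) powr (p+1)) (at x)"
    unfolding wt_def[abs_def] by (rule DERIV_mult[OF d1 d2])
  moreover have "((p+1) * (1-x) powr (p+1-1) * (-1)) * (1+x) powr (q+1) + ((q+1) * (1+x) powr (q+1-1) * 1) * (1-x) powr (p+1)
     = wt p q x * ((q+1)*(1-x) - (p+1)*(1+x))"
    using x unfolding wt_def by (simp add: powr_add algebra_simps)
  ultimately show ?thesis by simp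
qed

lemma powr_cont_0: assumes "r > 0" shows "continuous_on {-1..1::real} (\<lambda>x. (1 - x) powr r)"
    "continuous_on {-1..1::real} (\<lambda>x. (1 + x) powr r)"
proof -
  show "continuous_on {-1..1::real} (\<lambda>x. (1 - x) powr r)"
    unfolding continuous_on_def
  proof
    fix x :: real assume "x \<in> {-1..1}"
    then show "((\<lambda>x. (1 - x) powr r) \<longlongrightarrow> (1 - x) powr r) (at x within {-1..1})"
      using assms by (intro tendsto_intros) (auto simp: eventually_at_filter)
  qed
  show "continuous_on {-1..1::real} (\<lambda>x. (1 + x) powr r)"
    unfolding continuous_on_def
  proof
    fix x :: real assume "x \<in> {-1..1}"
    then show "((\<lambda>x. (1 + x) powr r) \<longlongrightarrow> (1 + x) powr r) (at x within {-1..1})"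
      using assms by (intro tendsto_intros) (auto simp: eventually_at_filter)
  qed
qed

lemma wt_cont: assumes "p > 0" "q > 0" shows "continuous_on {-1..1} (wt p q)"
  unfolding wt_def[abs_def] using powr_cont_0[OF assms(1)] powr_cont_0[OF assms(2)]
  by (intro continuous_on_mult) auto

lemma wt_end: "wt p q 1 = 0" "wt p q (-1) = 0"
  unfolding wt_def by simp_all

lemma wt_cont_open: "continuous_on {-1<..<1} (wt p q)"
  unfolding wt_def[abs_def] by (intro continuous_intros) auto

lemma wt_pos: "x \<in> {-1<..<1} \<Longrightarrow> wt p q x > 0"
  unfolding wt_def by auto

lemma wt_bound: assumes "x \<in> {-1<..<1}"
  shows "wt p q x \<le> (1 + 2 powr q) * (1-x) powr p + (1 + 2 powr p) * (1+x) powr q"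
proof -
  have x: "1 - x > 0" "1 + x > 0" using assms by auto
  have b: "\<And>y r. 1 \<le> y \<Longrightarrow> y \<le> 2 \<Longrightarrow> y powr r \<le> 1 + 2 powr (r::real)"
  proof -
    fix y r :: real assume y: "1 \<le> y" "y \<le> 2"
    show "y powr r \<le> 1 + 2 powr r"
    proof (cases "r \<ge> 0")
      case True
      then have "y powr r \<le> 2 powr r" using y by (intro powr_mono2) auto
      then show ?thesis by simp
    next
      case False
      then have "y powr r \<le> 1 powr r" using y by (intro powr_mono2') auto
      then have "y powr r \<le> 1" by simp
      moreover have "(0::real) \<le> 2 powr r" by simp
      ultimately show ?thesis by linarith
    qed
  qed
  show ?thesis
  proof (cases "x \<ge> 0")
    case True
    have "wt p q x \<le> (1-x) powr p * (1 + 2 powr q)"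
      unfolding wt_def using b[of "1+x" q] x True assms by (intro mult_left_mono) auto
    also have "\<dots> \<le> (1 + 2 powr q) * (1-x) powr p + (1 + 2 powr p) * (1+x) powr q"
      by (simp add: mult.commute add_increasing2)
    finally show ?thesis .
  next
    case False
    have "wt p q x \<le> (1 + 2 powr p) * (1+x) powr q"
      unfolding wt_def using b[of "1-x" p] x False assms
      by (intro mult_right_mono) auto
    also have "\<dots> \<le> (1 + 2 powr q) * (1-x) powr p + (1 + 2 powr p) * (1+x) powr q"
      by (simp add: add_increasing)
    finally show ?thesis .
  qed
qed

lemma powr_sum_integrable: fixes A B p q :: real assumes "p > -1" "q > -1"
  shows "(\<lambda>x. A * (1-x) powr p + B * (1+x) powr q) integrable_on {-1..1}"
proof -
  define G where "G x = (-A / (p+1)) * (1-x) powr (p+1) + (B / (q+1)) * (1+x) powr (q+1)" for x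
  have c1: "continuous_on {-1..1} (\<lambda>x. (1-x) powr (p+1))" by (rule powr_cont_0) (use assms in simp)
  have c2: "continuous_on {-1..1} (\<lambda>x. (1+x) powr (q+1))" by (rule powr_cont_0) (use assms in simp)
  have c: "continuous_on {-1..1} G"
    unfolding G_def[abs_def] by (intro continuous_on_add continuous_on_mult_left c1 c2)
  have d: "(G has_vector_derivative (A * (1-x) powr p + B * (1+x) powr q)) (at x)" if x: "x \<in> {-1<..<1}" for x
  proof -
    have x': "1 - x > 0" "1 + x > 0" using x by auto
    have d1: "((\<lambda>x. 1 - x) has_real_derivative -1) (at x)" by (auto intro!: derivative_eq_intros)
    have d2: "((\<lambda>x. 1 + x) has_real_derivative 1) (at x)" by (auto intro!: derivative_eq_intros)
    have "(G has_real_derivative ((-A / (p+1)) * ((p+1) * (1-x) powr (p+1 - of_nat 1) * (-1)) + (B / (q+1)) * ((q+1) * (1+x) powr (q+1 - of_nat 1) * 1))) (at x)"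
      unfolding G_def[abs_def]
      by (intro DERIV_add DERIV_cmult DERIV_fun_powr d1 d2) (use x' in auto)
    moreover have "(-A / (p+1)) * ((p+1) * (1-x) powr (p+1 - of_nat 1) * (-1)) + (B / (q+1)) * ((q+1) * (1+x) powr (q+1 - of_nat 1) * 1)
       = A * (1-x) powr p + B * (1+x) powr q"
      using assms by simp
    ultimately show ?thesis
      by (simp add: has_real_derivative_iff_has_vector_derivative[symmetric])
  qed
  show ?thesis using fundamental_theorem_of_calculus_interior[of "-1" 1 G, OF _ c d] by auto
qed

lemma L_int: assumes "p > -1" "q > -1" "continuous_on {-1<..<1} f"
    "\<And>x. x \<in> {-1<..<1} \<Longrightarrow> \<bar>f x\<bar> \<le> K * wt p q x"
  shows "f integrable_on {-1..1}"
proof -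
  have "\<bar>f 0\<bar> \<le> K * wt p q 0" using assms(4)[of 0] by simp
  then have K: "K \<ge> 0" unfolding wt_def by simp
  define g where "g x = (K * (1 + 2 powr q)) * (1-x) powr p + (K * (1 + 2 powr p)) * (1+x) powr q" for x
  have gi: "g integrable_on {-1..1}" unfolding g_def[abs_def] by (rule powr_sum_integrable[OF assms(1,2)])
  have gi': "g integrable_on {-1<..<1}"
    by (rule integrable_spike_set[OF gi]) (auto intro: negligible_subset[of "{-1,1}"])
  have "f integrable_on {-1<..<1}"
  proof (rule measurable_bounded_by_integrable_imp_integrable[OF _ gi'])
    show "f \<in> borel_measurable (lebesgue_on {-1<..<1})"
      by (rule continuous_imp_measurable_on_sets_lebesgue[OF assms(3)]) simp
    show "{-1<..<1::real} \<in> sets lebesgue" by simp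
    fix x :: real assume x: "x \<in> {-1<..<1}"
    have "\<bar>f x\<bar> \<le> K * wt p q x" using assms(4)[OF x] .
    also have "\<dots> \<le> K * ((1 + 2 powr q) * (1-x) powr p + (1 + 2 powr p) * (1+x) powr q)"
      using wt_bound[OF x, of p q] K by (intro mult_left_mono) auto
    also have "\<dots> = g x" unfolding g_def by (simp add: algebra_simps)
    finally show "norm (f x) \<le> g x" by simp
  qed
  then show ?thesis
    by (rule integrable_spike_set) (auto intro: negligible_subset[of "{-1,1}"])
qed

lemma ibp0:
  assumes "continuous_on {-1..1} F" "F (-1) = 0" "F 1 = 0"
    "\<And>x. x \<in> {-1<..<1} \<Longrightarrow> (F has_real_derivative (f x + g x)) (at x)"
    "f integrable_on {-1..1}"
  shows "g integrable_on {-1..1}" "integral {-1..1} g = - integral {-1..1} f"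
proof -
  have h: "((\<lambda>x. f x + g x) has_integral 0) {-1..1}"
    using fundamental_theorem_of_calculus_interior[of "-1" 1 F "\<lambda>x. f x + g x"] assms
    by (simp add: has_real_derivative_iff_has_vector_derivative)
  have e: "g = (\<lambda>x. (f x + g x) - f x)" by simp
  show gi: "g integrable_on {-1..1}"
    by (subst e, rule integrable_diff) (use h assms(5) in auto)
  have "integral {-1..1} (\<lambda>x. f x + g x) = 0" using h by (rule integral_unique)
  then show "integral {-1..1} g = - integral {-1..1} f"
    using integral_add[OF assms(5) gi] by simp
qed

lemma eps_split: assumes g: "g integrable_on {-1..1}" and x: "x \<in> {-1..1}"
  shows "eps_op g x = integral {-1..x} g - integral {-1..1} g / 2"
proof -
  have g1: "g integrable_on {-1..x}" by (rule integrable_subinterval_real[OF g]) (use x in auto)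
  have g2: "g integrable_on {x..1}" by (rule integrable_subinterval_real[OF g]) (use x in auto)
  have i1: "((\<lambda>y. 1/2 * sgn (x-y) * g y) has_integral (1/2 * integral {-1..x} g)) {-1..x}"
  proof (rule has_integral_spike_finite[of "{x}"])
    show "((\<lambda>y. 1/2 * g y) has_integral (1/2 * integral {-1..x} g)) {-1..x}"
      using has_integral_mult_right[OF integrable_integral[OF g1], of "1/2"] by simp
  qed auto
  have i2: "((\<lambda>y. 1/2 * sgn (x-y) * g y) has_integral (- 1/2 * integral {x..1} g)) {x..1}"
  proof (rule has_integral_spike_finite[of "{x}"])
    show "((\<lambda>y. - 1/2 * g y) has_integral (- 1/2 * integral {x..1} g)) {x..1}"
      using has_integral_mult_right[OF integrable_integral[OF g2], of "-1/2"] by simp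
  qed auto
  have "((\<lambda>y. 1/2 * sgn (x-y) * g y) has_integral (1/2 * integral {-1..x} g + - 1/2 * integral {x..1} g)) {-1..1}"
    by (rule has_integral_combine[OF _ _ i1 i2]) (use x in auto)
  then have "eps_op g x = 1/2 * integral {-1..x} g + - 1/2 * integral {x..1} g"
    unfolding eps_op_def by (rule integral_unique)
  moreover have "integral {-1..x} g + integral {x..1} g = integral {-1..1} g"
    by (rule Henstock_Kurzweil_Integration.integral_combine[OF _ _ g]) (use x in auto)
  ultimately show ?thesis by simp
qed

lemma eps_cont: assumes g: "g integrable_on {-1..1}" shows "continuous_on {-1..1} (eps_op g)"
proof -
  have "continuous_on {-1..1} (\<lambda>x. integral {-1..x} g - integral {-1..1} g / 2)"
    by (intro continuous_intros indefinite_integral_continuous_1 g)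
  then show ?thesis by (rule continuous_on_eq) (simp add: eps_split[OF g])
qed

lemma eps_end: assumes g: "g integrable_on {-1..1}"
  shows "eps_op g 1 = integral {-1..1} g / 2" "eps_op g (-1) = - integral {-1..1} g / 2"
  using eps_split[OF g, of 1] eps_split[OF g, of "-1"] by auto

lemma eps_deriv: assumes g: "g integrable_on {-1..1}" and gc: "continuous_on {-1<..<1} g"
  and x: "x \<in> {-1<..<1}"
  shows "(eps_op g has_real_derivative g x) (at x)"
proof -
  have xi: "x \<in> interior {-1..1}" using x by simp
  have cx: "continuous (at x within ({-1..1} - {})) g"
    using continuous_on_interior[OF gc, of x] x by (simp add: continuous_at_imp_continuous_at_within)
  have "((\<lambda>u. integral {-1..u} g) has_vector_derivative g x) (at x within ({-1..1} - {}))"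
    by (rule integral_has_vector_derivative_continuous_at[OF g _ _ cx]) (use x in auto)
  then have "((\<lambda>u. integral {-1..u} g) has_real_derivative g x) (at x)"
    using at_within_interior[OF xi] by (simp add: has_real_derivative_iff_has_vector_derivative)
  then have "((\<lambda>u. integral {-1..u} g - integral {-1..1} g / 2) has_real_derivative g x) (at x)"
    by (auto intro!: derivative_eq_intros)
  then show ?thesis
    by (rule has_field_derivative_transform_within_open[of _ _ _ "{-1<..<1}"])
       (use x eps_split[OF g] in auto)
qed

lemma eps_lin: assumes f: "f integrable_on {-1..1}" and g: "g integrable_on {-1..1}" and x: "x \<in> {-1..1}"
  shows "eps_op (\<lambda>y. c * f y + d * g y) x = c * eps_op f x + d * eps_op g x"
proof -
  have h: "(\<lambda>y. c * f y + d * g y) integrable_on {-1..1}"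
    by (intro integrable_add integrable_on_mult_right f g)
  have f1: "f integrable_on {-1..x}" by (rule integrable_subinterval_real[OF f]) (use x in auto)
  have g1: "g integrable_on {-1..x}" by (rule integrable_subinterval_real[OF g]) (use x in auto)
  show ?thesis unfolding eps_split[OF h x] eps_split[OF f x] eps_split[OF g x]
    by (simp add: integral_add integrable_on_mult_right f g f1 g1 algebra_simps)
qed

lemma eps_FTC:
  assumes c: "continuous_on {-1..1} F" and e: "F (-1) = 0" "F 1 = 0"
    and d: "\<And>x. x \<in> {-1<..<1} \<Longrightarrow> (F has_real_derivative g x) (at x)"
  shows "g integrable_on {-1..1}" "\<And>x. x \<in> {-1..1} \<Longrightarrow> eps_op g x = F x"
proof -
  have gen: "(g has_integral (F x - F (-1))) {-1..x}" if x: "x \<in> {-1..1}" for x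
  proof (rule fundamental_theorem_of_calculus_interior)
    show "-1 \<le> x" using x by simp
    show "continuous_on {-1..x} F" by (rule continuous_on_subset[OF c]) (use x in auto)
    fix y assume "y \<in> {-1<..<x}"
    then show "(F has_vector_derivative g y) (at y)"
      using d[of y] x by (simp add: has_real_derivative_iff_has_vector_derivative)
  qed
  show gi: "g integrable_on {-1..1}" using gen[of 1] by auto
  fix x :: real assume x: "x \<in> {-1..1}"
  show "eps_op g x = F x"
    unfolding eps_split[OF gi x] using integral_unique[OF gen[OF x]] integral_unique[OF gen[of 1]] e
    by simp
qed

lemma eps_ibp:
  assumes c: "continuous_on {-1..1} F" and e: "F (-1) = 0" "F 1 = 0"
    and d: "\<And>x. x \<in> {-1<..<1} \<Longrightarrow> (F has_real_derivative g x) (at x)"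
    and h: "h integrable_on {-1..1}" "continuous_on {-1<..<1} h"
    and Fh: "(\<lambda>x. F x * h x) integrable_on {-1..1}"
  shows "(\<lambda>x. g x * eps_op h x) integrable_on {-1..1}"
        "integral {-1..1} (\<lambda>x. g x * eps_op h x) = - integral {-1..1} (\<lambda>x. F x * h x)"
proof -
  have c2: "continuous_on {-1..1} (\<lambda>x. F x * eps_op h x)"
    by (intro continuous_on_mult c eps_cont h)
  have d2: "((\<lambda>x. F x * eps_op h x) has_real_derivative (F x * h x + g x * eps_op h x)) (at x)"
    if x: "x \<in> {-1<..<1}" for x
    using DERIV_mult[OF d[OF x] eps_deriv[OF h x]] by (simp add: algebra_simps)
  show "(\<lambda>x. g x * eps_op h x) integrable_on {-1..1}"
       "integral {-1..1} (\<lambda>x. g x * eps_op h x) = - integral {-1..1} (\<lambda>x. F x * h x)"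
    using ibp0[OF c2 _ _ d2 Fh] e by auto
qed

lemma eps_self:
  assumes h: "h integrable_on {-1..1}" "continuous_on {-1<..<1} h"
  shows "(\<lambda>x. h x * eps_op h x) integrable_on {-1..1}"
        "integral {-1..1} (\<lambda>x. h x * eps_op h x) = 0"
proof -
  have c2: "continuous_on {-1..1} (\<lambda>x. eps_op h x * eps_op h x / 2)"
    by (intro continuous_intros eps_cont h) auto
  have d2: "((\<lambda>x. eps_op h x * eps_op h x / 2) has_vector_derivative (h x * eps_op h x)) (at x)"
    if x: "x \<in> {-1<..<1}" for x
  proof -
    have "((\<lambda>x. eps_op h x * eps_op h x / 2) has_real_derivative (h x * eps_op h x + h x * eps_op h x) / 2) (at x)"
      by (intro DERIV_cdivide DERIV_mult eps_deriv[OF h x])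
    then show ?thesis by (simp add: has_real_derivative_iff_has_vector_derivative[symmetric])
  qed
  have "((\<lambda>x. h x * eps_op h x) has_integral 0) {-1..1}"
    using fundamental_theorem_of_calculus_interior[of "-1" 1 _ "\<lambda>x. h x * eps_op h x", OF _ c2 d2]
      eps_end[OF h(1)] by simp
  then show "(\<lambda>x. h x * eps_op h x) integrable_on {-1..1}" "integral {-1..1} (\<lambda>x. h x * eps_op h x) = 0"
    by (auto intro: integral_unique)
qed

lemma cont_bound: assumes "continuous_on {-1..1::real} f" shows "\<exists>K. \<forall>x\<in>{-1..1}. \<bar>f x\<bar> \<le> (K::real)"
proof -
  have "compact (f ` {-1..1})" by (rule compact_continuous_image[OF assms]) simp
  then have "bounded (f ` {-1..1})" by (rule compact_imp_bounded)
  then show ?thesis unfolding bounded_real by auto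
qed

lemma pos_integral:
  fixes f :: "real \<Rightarrow> real"
  assumes fi: "f integrable_on {-1..1}" and fc: "continuous_on {-1<..<1} f"
    and nn: "\<And>x. x \<in> {-1..1} \<Longrightarrow> f x \<ge> 0" and x0: "x0 \<in> {-1<..<1}" "f x0 > (0::real)"
  shows "integral {-1..1} f > 0"
proof -
  have "isCont f x0" using continuous_on_eq_continuous_at[OF open_greaterThanLessThan, of "-1" 1 f] fc x0(1) by simp
  then obtain d where d: "d > 0" "\<And>y. \<bar>y - x0\<bar> < d \<Longrightarrow> \<bar>f y - f x0\<bar> < f x0 / 2"
    using x0(2) unfolding continuous_at_eps_delta dist_real_def
    by (metis half_gt_zero)
  define e where "e = min (d/2) (min ((1 - x0)/2) ((x0 + 1)/2))"
  have e1: "e \<le> d/2" "e \<le> (1-x0)/2" "e \<le> (x0+1)/2" unfolding e_def by (simp_all only: min.cobounded1 min.coboundedI2)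
  have e0: "e > 0" using d x0 unfolding e_def by auto
  have e: "e > 0" "e < d" "x0 - e > -1" "x0 + e < 1" using e0 e1 d x0 by auto
  have sub: "{x0-e..x0+e} \<subseteq> {-1..1}" using e by auto
  have lb: "f y \<ge> f x0 / 2" if "y \<in> {x0-e..x0+e}" for y
  proof -
    have "\<bar>y - x0\<bar> < d" using that e by auto
    then have "\<bar>f y - f x0\<bar> < f x0 / 2" by (rule d(2))
    then show ?thesis by linarith
  qed
  have fi2: "f integrable_on {x0-e..x0+e}" by (rule integrable_subinterval_real[OF fi sub])
  have "integral {x0-e..x0+e} (\<lambda>y. f x0 / 2) \<le> integral {x0-e..x0+e} f"
    by (rule integral_le) (use fi2 lb in auto)
  moreover have "integral {x0-e..x0+e} (\<lambda>y. f x0 / 2) = 2 * e * (f x0 / 2)" using e by simp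
  moreover have "integral {x0-e..x0+e} f \<le> integral {-1..1} f"
    by (rule integral_subset_le[OF sub fi2 fi]) (use nn in auto)
  moreover have "2 * e * (f x0 / 2) > 0" using e x0 by simp
  ultimately show ?thesis by linarith
qed

lemma gchoose_pos: "\<alpha> > -1 \<Longrightarrow> (real n + \<alpha>) gchoose n > 0"
  unfolding gbinomial_pochhammer' by (intro divide_pos_pos pochhammer_pos) auto

lemma jacobiP_at1: "jacobiP n \<alpha> \<beta> 1 = (real n + \<alpha>) gchoose n"
  unfolding jacobiP_def by (simp add: zero_power sum.atMost_shift)

context
  fixes \<alpha> \<beta> :: real assumes ab: "\<alpha> > -1" "\<beta> > -1"
begin

lemma P_deriv: "(jacobiP n \<alpha> \<beta> has_real_derivative jd n \<alpha> \<beta> x) (at x)"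
  using jacobi_deriv ab by blast

lemma P_cont: "continuous_on S (jacobiP n \<alpha> \<beta>)"
  by (rule continuous_at_imp_continuous_on) (use P_deriv DERIV_isCont in blast)

lemma jd_cont: "continuous_on S (jd n \<alpha> \<beta>)"
proof (cases n)
  case 0 then show ?thesis by (simp add: jd_0)
next
  case (Suc k)
  have "continuous_on S (jacobiP k (\<alpha>+1) (\<beta>+1))"
    by (rule continuous_at_imp_continuous_on) (use jacobi_deriv[of "\<alpha>+1" "\<beta>+1"] DERIV_isCont ab in force)
  then show ?thesis unfolding Suc by (subst jd_Suc[OF ab, abs_def]) (intro continuous_intros)
qed

lemma P_bound: "\<exists>K. \<forall>x\<in>{-1..1}. \<bar>jacobiP n \<alpha> \<beta> x\<bar> \<le> K"
  by (rule cont_bound[OF P_cont])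

lemma ode: assumes x: "x \<in> {-1<..<1}"
  shows "((\<lambda>x. wt (\<alpha>+1) (\<beta>+1) x * jd n \<alpha> \<beta> x) has_real_derivative
     (-(real n * (real n + \<alpha> + \<beta> + 1)) * (wt \<alpha> \<beta> x * jacobiP n \<alpha> \<beta> x))) (at x)"
proof (cases n)
  case 0 then show ?thesis by (simp add: jd_0)
next
  case (Suc k)
  let ?Q = "jacobiP k (\<alpha>+1) (\<beta>+1)"
  have ab': "\<alpha>+1 > -1" "\<beta>+1 > -1" using ab by auto
  have x': "1 - x > 0" "1 + x > 0" using x by auto
  have om: "wt (\<alpha>+1) (\<beta>+1) x = (1 - x^2) * wt \<alpha> \<beta> x"
    using x' unfolding wt_def by (simp add: powr_add power2_eq_square algebra_simps)
  have "((\<lambda>x. wt (\<alpha>+1) (\<beta>+1) x * ?Q x) has_real_derivative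
      wt \<alpha> \<beta> x * ((\<beta>+1)*(1-x) - (\<alpha>+1)*(1+x)) * ?Q x + jd k (\<alpha>+1) (\<beta>+1) x * wt (\<alpha>+1) (\<beta>+1) x) (at x)"
    by (rule DERIV_mult[OF wt_deriv[OF x] jacobi_deriv[OF ab']])
  moreover have "wt \<alpha> \<beta> x * ((\<beta>+1)*(1-x) - (\<alpha>+1)*(1+x)) * ?Q x + jd k (\<alpha>+1) (\<beta>+1) x * wt (\<alpha>+1) (\<beta>+1) x
      = wt \<alpha> \<beta> x * (-2 * (real k + 1) * jacobiP (Suc k) \<alpha> \<beta> x)"
    unfolding om jacobi_R[OF ab, of x k, symmetric] by (simp add: algebra_simps)
  ultimately have "((\<lambda>x. wt (\<alpha>+1) (\<beta>+1) x * ?Q x) has_real_derivative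
      wt \<alpha> \<beta> x * (-2 * (real k + 1) * jacobiP (Suc k) \<alpha> \<beta> x)) (at x)" by simp
  then have "((\<lambda>x. (real (Suc k) + \<alpha> + \<beta> + 1)/2 * (wt (\<alpha>+1) (\<beta>+1) x * ?Q x)) has_real_derivative
      (real (Suc k) + \<alpha> + \<beta> + 1)/2 * (wt \<alpha> \<beta> x * (-2 * (real k + 1) * jacobiP (Suc k) \<alpha> \<beta> x))) (at x)"
    by (rule DERIV_cmult)
  moreover have "(real (Suc k) + \<alpha> + \<beta> + 1)/2 * (wt \<alpha> \<beta> x * (-2 * (real k + 1) * jacobiP (Suc k) \<alpha> \<beta> x))
     = (-(real (Suc k) * (real (Suc k) + \<alpha> + \<beta> + 1))) * (wt \<alpha> \<beta> x * jacobiP (Suc k) \<alpha> \<beta> x)"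
    by (simp add: field_simps)
  moreover have "(\<lambda>x. wt (\<alpha>+1) (\<beta>+1) x * jd (Suc k) \<alpha> \<beta> x) = (\<lambda>x. (real (Suc k) + \<alpha> + \<beta> + 1)/2 * (wt (\<alpha>+1) (\<beta>+1) x * ?Q x))"
    by (simp add: jd_Suc[OF ab] algebra_simps)
  ultimately show ?thesis unfolding Suc by simp
qed

lemma W_eq: "jacobi_weight \<alpha> \<beta> = wt \<alpha> \<beta>"
  unfolding jacobi_weight_def wt_def[abs_def] ..

lemma PPW_int: "(\<lambda>x. jacobiP n \<alpha> \<beta> x * jacobiP m \<alpha> \<beta> x * wt \<alpha> \<beta> x) integrable_on {-1..1}"
proof -
  obtain K1 where K1: "\<forall>x\<in>{-1..1}. \<bar>jacobiP n \<alpha> \<beta> x\<bar> \<le> K1" using P_bound by blast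
  obtain K2 where K2: "\<forall>x\<in>{-1..1}. \<bar>jacobiP m \<alpha> \<beta> x\<bar> \<le> K2" using P_bound by blast
  show ?thesis
  proof (rule L_int[OF ab])
    show "continuous_on {-1<..<1} (\<lambda>x. jacobiP n \<alpha> \<beta> x * jacobiP m \<alpha> \<beta> x * wt \<alpha> \<beta> x)"
      by (intro continuous_on_mult P_cont wt_cont_open)
    fix x :: real assume x: "x \<in> {-1<..<1}"
    have "\<bar>jacobiP n \<alpha> \<beta> x * jacobiP m \<alpha> \<beta> x * wt \<alpha> \<beta> x\<bar> = \<bar>jacobiP n \<alpha> \<beta> x\<bar> * \<bar>jacobiP m \<alpha> \<beta> x\<bar> * wt \<alpha> \<beta> x"
      using abs_of_pos[OF wt_pos[OF x]] by (simp add: abs_mult)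
    also have "\<dots> \<le> K1 * K2 * wt \<alpha> \<beta> x"
    proof -
      have "K1 \<ge> 0" using K1 by force
      then show ?thesis
      using K1 K2 x less_imp_le[OF wt_pos[OF x]] by (intro mult_right_mono mult_mono) auto
    qed
    finally show "\<bar>jacobiP n \<alpha> \<beta> x * jacobiP m \<alpha> \<beta> x * wt \<alpha> \<beta> x\<bar> \<le> K1 * K2 * wt \<alpha> \<beta> x" .
  qed
qed

lemma ibp_sym: "integral {-1..1} (\<lambda>x. wt (\<alpha>+1) (\<beta>+1) x * jd n \<alpha> \<beta> x * jd m \<alpha> \<beta> x)
   = real n * (real n + \<alpha> + \<beta> + 1) * integral {-1..1} (\<lambda>x. jacobiP n \<alpha> \<beta> x * jacobiP m \<alpha> \<beta> x * wt \<alpha> \<beta> x)"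
proof -
  let ?F = "\<lambda>x. wt (\<alpha>+1) (\<beta>+1) x * jd n \<alpha> \<beta> x * jacobiP m \<alpha> \<beta> x"
  let ?f = "\<lambda>x. (-(real n * (real n + \<alpha> + \<beta> + 1))) * (jacobiP n \<alpha> \<beta> x * jacobiP m \<alpha> \<beta> x * wt \<alpha> \<beta> x)"
  let ?g = "\<lambda>x. wt (\<alpha>+1) (\<beta>+1) x * jd n \<alpha> \<beta> x * jd m \<alpha> \<beta> x"
  have c: "continuous_on {-1..1} ?F"
    using ab by (intro continuous_on_mult wt_cont jd_cont P_cont) auto
  have d: "(?F has_real_derivative (?f x + ?g x)) (at x)" if x: "x \<in> {-1<..<1}" for x
    using DERIV_mult[OF ode[OF x, of n] P_deriv[of m x]] by (simp add: algebra_simps)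
  have fi: "?f integrable_on {-1..1}" by (intro integrable_on_mult_right PPW_int)
  have "integral {-1..1} ?g = - integral {-1..1} ?f"
    by (rule ibp0(2)[OF c _ _ d fi]) (simp_all add: wt_end)
  then show ?thesis by simp
qed

lemma orth: assumes "n \<noteq> m"
  shows "integral {-1..1} (\<lambda>x. jacobiP n \<alpha> \<beta> x * jacobiP m \<alpha> \<beta> x * wt \<alpha> \<beta> x) = 0"
proof -
  let ?I = "\<lambda>n m. integral {-1..1} (\<lambda>x. jacobiP n \<alpha> \<beta> x * jacobiP m \<alpha> \<beta> x * wt \<alpha> \<beta> x)"
  have s1: "?I m n = ?I n m" by (simp add: mult.commute mult.left_commute)
  have s2: "integral {-1..1} (\<lambda>x. wt (\<alpha>+1) (\<beta>+1) x * jd n \<alpha> \<beta> x * jd m \<alpha> \<beta> x)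
     = integral {-1..1} (\<lambda>x. wt (\<alpha>+1) (\<beta>+1) x * jd m \<alpha> \<beta> x * jd n \<alpha> \<beta> x)"
    by (simp add: mult.commute mult.left_commute)
  have e1: "integral {-1..1} (\<lambda>x. wt (\<alpha>+1) (\<beta>+1) x * jd n \<alpha> \<beta> x * jd m \<alpha> \<beta> x)
     = real n * (real n + \<alpha> + \<beta> + 1) * ?I n m" by (rule ibp_sym)
  have e2: "integral {-1..1} (\<lambda>x. wt (\<alpha>+1) (\<beta>+1) x * jd m \<alpha> \<beta> x * jd n \<alpha> \<beta> x)
     = real m * (real m + \<alpha> + \<beta> + 1) * ?I n m" using ibp_sym[of m n] s1 by simp
  have "real n * (real n + \<alpha> + \<beta> + 1) * ?I n m = real m * (real m + \<alpha> + \<beta> + 1) * ?I n m"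
    by (simp only: e1[symmetric] e2[symmetric] s2)
  then have "(real n * (real n + \<alpha> + \<beta> + 1) - real m * (real m + \<alpha> + \<beta> + 1)) * ?I n m = 0"
    by (simp only: left_diff_distrib)
  moreover have "real n * (real n + \<alpha> + \<beta> + 1) - real m * (real m + \<alpha> + \<beta> + 1) = (real n - real m) * (real n + real m + \<alpha> + \<beta> + 1)"
    by (simp add: algebra_simps)
  ultimately have "(real n - real m) * (real n + real m + \<alpha> + \<beta> + 1) * ?I n m = 0" by simp
  moreover have "real n - real m \<noteq> 0" using assms by simp
  moreover have "real n + real m + \<alpha> + \<beta> + 1 > 0" using assms ab by linarith
  ultimately show ?thesis by simp
qed

lemma h_pos: "integral {-1..1} (\<lambda>x. jacobiP n \<alpha> \<beta> x * jacobiP n \<alpha> \<beta> x * wt \<alpha> \<beta> x) > 0"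
proof -
  have p1: "jacobiP n \<alpha> \<beta> 1 > 0" unfolding jacobiP_at1 using gchoose_pos ab by blast
  have "((jacobiP n \<alpha> \<beta>) \<longlongrightarrow> jacobiP n \<alpha> \<beta> 1) (at_left 1)"
    using P_cont[of UNIV n] by (simp add: continuous_on_def filterlim_at_split) 
  then have "eventually (\<lambda>x. jacobiP n \<alpha> \<beta> x > 0) (at_left (1::real))"
    using p1 by (rule order_tendstoD)
  then obtain b where b: "b < 1" "\<And>y. b < y \<Longrightarrow> y < 1 \<Longrightarrow> jacobiP n \<alpha> \<beta> y > 0"
    unfolding eventually_at_left_field by blast
  define x0 where "x0 = (max b 0 + 1) / 2"
  have x0: "x0 \<in> {-1<..<1}" "jacobiP n \<alpha> \<beta> x0 > 0" using b unfolding x0_def by (auto simp: max_def)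
  show ?thesis
  proof (rule pos_integral[OF PPW_int _ _ x0(1)])
    show "continuous_on {-1<..<1} (\<lambda>x. jacobiP n \<alpha> \<beta> x * jacobiP n \<alpha> \<beta> x * wt \<alpha> \<beta> x)"
      by (intro continuous_on_mult P_cont wt_cont_open)
    fix x :: real assume "x \<in> {-1..1}"
    show "0 \<le> jacobiP n \<alpha> \<beta> x * jacobiP n \<alpha> \<beta> x * wt \<alpha> \<beta> x"
    proof (rule mult_nonneg_nonneg)
      show "0 \<le> jacobiP n \<alpha> \<beta> x * jacobiP n \<alpha> \<beta> x" by simp
      show "0 \<le> wt \<alpha> \<beta> x" unfolding wt_def by simp
    qed
  next
    show "0 < jacobiP n \<alpha> \<beta> x0 * jacobiP n \<alpha> \<beta> x0 * wt \<alpha> \<beta> x0"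
      using x0 wt_pos[OF x0(1)] by simp
  qed
qed

end

lemma wt_mult: assumes "x \<in> {-1<..<1}" shows "wt p q x * wt r s x = wt (p+r) (q+s) x"
  using assms unfolding wt_def by (simp add: powr_add algebra_simps)

lemma wt_shift: assumes "x \<in> {-1<..<1}" shows "wt (p+1) (q+1) x = (1 - x^2) * wt p q x"
  using assms unfolding wt_def by (simp add: powr_add power2_eq_square algebra_simps)

context
  fixes a b :: real assumes ab: "a > -2" "b > -2"
begin

lemma ab1: "a + 1 > -1" "b + 1 > -1" using ab by auto

abbreviation P where "P j \<equiv> jacobiP j (a+1) (b+1)"
abbreviation hh where "hh j \<equiv> jacobi_h j (a+1) (b+1)"
abbreviation Phi where "Phi j \<equiv> phi1 a b j"
abbreviation OP where "OP j \<equiv> (\<lambda>t. (1 - t^2) * phi1 a b j t)"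

lemma h_alt: "hh j = integral {-1..1} (\<lambda>x. P j x * P j x * wt (a+1) (b+1) x)"
  unfolding jacobi_h_def jacobi_weight_def wt_def power2_eq_square ..

lemma hpos: "hh j > 0"
  unfolding h_alt by (rule h_pos[OF ab1])

lemma phi_eq: "Phi j x = P j x / sqrt (hh j) * wt (a/2) (b/2) x"
  unfolding phi1_def wt_def by simp

lemma OP_eq: assumes "x \<in> {-1..1}"
  shows "OP j x = P j x / sqrt (hh j) * wt (a/2+1) (b/2+1) x"
proof (cases "x \<in> {-1<..<1}")
  case True
  show ?thesis unfolding phi_eq wt_shift[OF True] by simp
next
  case False
  then have "x = 1 \<or> x = -1" using assms by auto
  then show ?thesis unfolding phi_eq wt_def by auto
qed

lemma PhiOP: assumes "x \<in> {-1..1}"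
  shows "Phi j x * OP k x = P j x * P k x * wt (a+1) (b+1) x / (sqrt (hh j) * sqrt (hh k))"
proof (cases "x \<in> {-1<..<1}")
  case True
  have w0: "wt (a/2) (b/2) x * wt (a/2+1) (b/2+1) x = wt (a/2 + (a/2+1)) (b/2 + (b/2+1)) x"
    by (rule wt_mult[OF True])
  have "a/2 + (a/2+1) = a + 1" "b/2 + (b/2+1) = b + 1" by simp_all
  then have w: "wt (a/2) (b/2) x * wt (a/2+1) (b/2+1) x = wt (a+1) (b+1) x" using w0 by simp
  have "Phi j x * OP k x = P j x * P k x * (wt (a/2) (b/2) x * wt (a/2+1) (b/2+1) x) / (sqrt (hh j) * sqrt (hh k))"
    using OP_eq[OF assms, of k] phi_eq[of j x] by simp
  then show ?thesis unfolding w .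
next
  case False
  then have "x = 1 \<or> x = -1" using assms by auto
  then show ?thesis unfolding phi_eq wt_def by auto
qed

lemma PPW_int': "(\<lambda>x. P j x * P k x * wt (a+1) (b+1) x) integrable_on {-1..1}"
  by (rule PPW_int[OF ab1])

lemma orthonormal:
  "(\<lambda>x. Phi j x * OP k x) integrable_on {-1..1}"
  "integral {-1..1} (\<lambda>x. Phi j x * OP k x) = (if j = k then 1 else 0)"
proof -
  have e: "integral {-1..1} (\<lambda>x. Phi j x * OP k x) = integral {-1..1} (\<lambda>x. P j x * P k x * wt (a+1) (b+1) x / (sqrt (hh j) * sqrt (hh k)))"
    by (rule integral_cong) (rule PhiOP)
  have i: "(\<lambda>x. P j x * P k x * wt (a+1) (b+1) x / (sqrt (hh j) * sqrt (hh k))) integrable_on {-1..1}"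
    using integrable_on_mult_left[OF PPW_int', where c="1 / (sqrt (hh j) * sqrt (hh k))"] by simp
  show "(\<lambda>x. Phi j x * OP k x) integrable_on {-1..1}"
    by (rule integrable_spike_finite[of "{}" _ _ _, OF _ _ i]) (auto simp: PhiOP)
  show "integral {-1..1} (\<lambda>x. Phi j x * OP k x) = (if j = k then 1 else 0)"
  proof (cases "j = k")
    case True
    have e2: "integral {-1..1} (\<lambda>x. Phi j x * OP k x) = integral {-1..1} (\<lambda>x. P j x * P k x * wt (a+1) (b+1) x) / (sqrt (hh j) * sqrt (hh k))"
      unfolding e by simp
    have "sqrt (hh j) * sqrt (hh j) = hh j" using hpos[of j] by simp
    then show ?thesis using e2 True hpos[of j] unfolding h_alt by simp
  next
    case False
    then show ?thesis unfolding e using orth[OF ab1 False] by simp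
  qed
qed

definition cc where "cc j = del (a+1) (b+1) j * sqrt (hh (j+1)) / sqrt (hh j)"
definition cm where "cm j = gam (a+1) (b+1) j * sqrt (hh (j-1)) / sqrt (hh j)"

lemma Phi_cont: "continuous_on {-1<..<1} (Phi j)"
proof -
  have "continuous_on {-1<..<1} (\<lambda>x. P j x / sqrt (hh j) * wt (a/2) (b/2) x)"
    using hpos[of j] by (intro continuous_intros P_cont[OF ab1] wt_cont_open) auto
  then show ?thesis by (rule continuous_on_eq) (simp add: phi_eq)
qed

lemma OP_cont: "continuous_on {-1..1} (OP j)"
proof -
  have "continuous_on {-1..1} (\<lambda>x. P j x / sqrt (hh j) * wt (a/2+1) (b/2+1) x)"
    using ab hpos[of j] by (intro continuous_intros P_cont[OF ab1] wt_cont) auto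
  then show ?thesis by (rule continuous_on_eq) (simp add: OP_eq)
qed

lemma OP_end: "OP j 1 = 0" "OP j (-1) = 0" by simp_all

lemma OP_deriv: assumes x: "x \<in> {-1<..<1}"
  shows "(OP j has_real_derivative (cm j * Phi (j-1) x - cc j * Phi (j+1) x)) (at x)"
proof -
  define G where "G t = P j t / sqrt (hh j) * wt (a/2+1) (b/2+1) t" for t
  have h: "hh j > 0" "hh (j-1) > 0" "hh (j+1) > 0" using hpos by auto
  have d0: "(G has_real_derivative (jd j (a+1) (b+1) x / sqrt (hh j) * wt (a/2+1) (b/2+1) x
        + wt (a/2) (b/2) x * ((b/2+1)*(1-x) - (a/2+1)*(1+x)) * (P j x / sqrt (hh j)))) (at x)"
    unfolding G_def[abs_def]
    by (rule DERIV_mult[OF DERIV_cdivide[OF P_deriv[OF ab1]] wt_deriv[OF x]])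
  have "jd j (a+1) (b+1) x / sqrt (hh j) * wt (a/2+1) (b/2+1) x
        + wt (a/2) (b/2) x * ((b/2+1)*(1-x) - (a/2+1)*(1+x)) * (P j x / sqrt (hh j))
     = wt (a/2) (b/2) x / sqrt (hh j) * ((1 - x^2) * jd j (a+1) (b+1) x
        + (((b+1)-(a+1))/2 - ((a+1)+(b+1)+2)/2*x) * P j x)"
  proof -
    have c: "(b/2+1)*(1-x) - (a/2+1)*(1+x) = ((b+1)-(a+1))/2 - ((a+1)+(b+1)+2)/2*x" by (simp add: field_simps)
    have gen: "\<And>J s Om W c Q :: real. J / s * (Om * W) + W * c * (Q / s) = W / s * (Om * J + c * Q)"
      by (simp add: field_simps add_divide_distrib)
    show ?thesis unfolding wt_shift[OF x] c by (rule gen)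
  qed
  also have "\<dots> = wt (a/2) (b/2) x / sqrt (hh j) * (gam (a+1) (b+1) j * P (j-1) x - del (a+1) (b+1) j * P (j+1) x)"
    unfolding jacobi_I2[OF ab1] ..
  also have "\<dots> = cm j * Phi (j-1) x - cc j * Phi (j+1) x"
    unfolding cm_def cc_def phi_eq using h by (simp add: field_simps)
  finally have eq: "jd j (a+1) (b+1) x / sqrt (hh j) * wt (a/2+1) (b/2+1) x
        + wt (a/2) (b/2) x * ((b/2+1)*(1-x) - (a/2+1)*(1+x)) * (P j x / sqrt (hh j))
        = cm j * Phi (j-1) x - cc j * Phi (j+1) x" .
  have d: "(G has_real_derivative (cm j * Phi (j-1) x - cc j * Phi (j+1) x)) (at x)"
    using d0 unfolding eq .
  show ?thesis
    by (rule has_field_derivative_transform_within_open[OF d, of "{-1<..<1}"])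
       (use x in \<open>auto simp: G_def OP_eq\<close>)
qed

lemma Phi_bound: "\<exists>K. \<forall>x\<in>{-1<..<1}. \<bar>Phi j x\<bar> \<le> K * wt (a/2) (b/2) x"
proof -
  obtain K where K: "\<forall>x\<in>{-1..1}. \<bar>P j x\<bar> \<le> K" using P_bound[OF ab1] by blast
  have "\<bar>Phi j x\<bar> \<le> (K / sqrt (hh j)) * wt (a/2) (b/2) x" if x: "x \<in> {-1<..<1}" for x
  proof -
    have "\<bar>Phi j x\<bar> = \<bar>P j x\<bar> / sqrt (hh j) * wt (a/2) (b/2) x"
      unfolding phi_eq using abs_of_pos[OF wt_pos[OF x]] hpos[of j] by (simp add: abs_mult)
    also have "\<dots> \<le> K / sqrt (hh j) * wt (a/2) (b/2) x"
      using K x less_imp_le[OF wt_pos[OF x]] hpos[of j] by (intro mult_right_mono divide_right_mono) auto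
    finally show ?thesis .
  qed
  then show ?thesis by blast
qed

lemma Phi_times_int: assumes "continuous_on {-1..1} g"
  shows "(\<lambda>x. Phi j x * g x) integrable_on {-1..1}"
proof -
  obtain K where K: "\<forall>x\<in>{-1<..<1}. \<bar>Phi j x\<bar> \<le> K * wt (a/2) (b/2) x" using Phi_bound by blast
  obtain L where L: "\<forall>x\<in>{-1..1}. \<bar>g x\<bar> \<le> L" using cont_bound[OF assms] by blast
  show ?thesis
  proof (rule L_int[where K="K*L"])
    show "a/2 > -1" "b/2 > -1" using ab by auto
    show "continuous_on {-1<..<1} (\<lambda>x. Phi j x * g x)"
      by (intro continuous_on_mult Phi_cont continuous_on_subset[OF assms]) auto
    fix x :: real assume x: "x \<in> {-1<..<1}"
    have "\<bar>Phi j x * g x\<bar> = \<bar>Phi j x\<bar> * \<bar>g x\<bar>" by (simp add: abs_mult)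
    also have "\<dots> \<le> (K * wt (a/2) (b/2) x) * L"
    proof (rule mult_mono)
      show "\<bar>Phi j x\<bar> \<le> K * wt (a / 2) (b / 2) x" using K x by blast
      show "\<bar>g x\<bar> \<le> L" using L x by auto
      show "0 \<le> K * wt (a / 2) (b / 2) x" using K x by (meson abs_ge_zero order_trans)
    qed simp
    finally show "\<bar>Phi j x * g x\<bar> \<le> K * L * wt (a/2) (b/2) x" by (simp add: algebra_simps)
  qed
qed

lemma Phi_int: "Phi j integrable_on {-1..1}"
  using Phi_times_int[of "\<lambda>x. 1"] by simp

lemma cc_pos: "cc j > 0"
proof -
  have "del (a+1) (b+1) j > 0"
    unfolding del_def using ab by (auto intro!: divide_pos_pos mult_pos_pos)
  then show ?thesis unfolding cc_def using hpos by simp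
qed

lemma int_PhiOP: "integral {-1..1} (\<lambda>x. Phi j x * OP k x) = (if j = k then 1 else 0)"
  by (rule orthonormal(2))

lemma cm_cc: "cm (Suc j) = cc j"
proof -
  let ?F = "\<lambda>x. OP j x * OP (Suc j) x"
  let ?f = "\<lambda>x. (cm j * Phi (j-1) x - cc j * Phi (j+1) x) * OP (Suc j) x"
  let ?g = "\<lambda>x. OP j x * (cm (Suc j) * Phi (Suc j - 1) x - cc (Suc j) * Phi (Suc j + 1) x)"
  have c: "continuous_on {-1..1} ?F" by (intro continuous_on_mult OP_cont)
  have d: "(?F has_real_derivative (?f x + ?g x)) (at x)" if "x \<in> {-1<..<1}" for x
    using DERIV_mult[OF OP_deriv[OF that, of j] OP_deriv[OF that, of "Suc j"]] by (simp add: algebra_simps)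
  have i1: "(\<lambda>x. Phi k x * OP l x) integrable_on {-1..1}" for k l by (rule orthonormal(1))
  have fe: "?f = (\<lambda>x. cm j * (Phi (j-1) x * OP (Suc j) x) - cc j * (Phi (j+1) x * OP (Suc j) x))"
    by (auto simp: algebra_simps)
  have ge: "?g = (\<lambda>x. cm (Suc j) * (Phi j x * OP j x) - cc (Suc j) * (Phi (j+2) x * OP j x))"
    by (auto simp: algebra_simps)
  have fi: "?f integrable_on {-1..1}" unfolding fe by (intro integrable_diff integrable_on_mult_right i1)
  have "integral {-1..1} ?g = - integral {-1..1} ?f" by (rule ibp0(2)[OF c _ _ d fi]) simp_all
  moreover have "integral {-1..1} ?f = - cc j"
    unfolding fe by (simp add: integral_diff integrable_on_mult_right i1 int_PhiOP)
  moreover have "integral {-1..1} ?g = cm (Suc j)"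
    unfolding ge by (simp add: integral_diff integrable_on_mult_right i1 int_PhiOP)
  ultimately show ?thesis by simp
qed

lemma cc_C: assumes "N \<ge> 2" shows "cc (N-1) = C1 a b N"
proof -
  have N1: "Suc (N-1) = N" "N - 1 \<noteq> 0" "N \<noteq> 0" using assms by auto
  have rN: "real (N-1) = real N - 1" using assms by (simp add: of_nat_diff)
  have h: "hh N > 0" "hh (N-1) > 0" using hpos by auto
  have "cc (N-1) * cc (N-1) = cc (N-1) * cm N" using cm_cc[of "N-1"] N1 by simp
  also have "\<dots> = del (a+1) (b+1) (N-1) * gam (a+1) (b+1) N"
    unfolding cc_def cm_def using h N1 by (simp add: field_simps)
  also have "\<dots> = real N * (real N + a + 1) * (real N + b + 1) * (real N + a + b + 2)
                    / ((2 * real N + a + b + 1) * (2 * real N + a + b + 3))"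
    unfolding del_def gam_def using N1 rN by (simp add: field_simps)
  finally have sq: "cc (N-1) * cc (N-1) = real N * (real N + a + 1) * (real N + b + 1) * (real N + a + b + 2)
                    / ((2 * real N + a + b + 1) * (2 * real N + a + b + 3))" .
  have "cc (N-1) = sqrt (cc (N-1) * cc (N-1))" using cc_pos[of "N-1"] by simp
  then show ?thesis unfolding C1_def sq .
qed

lemma cm0: "cm 0 = 0" unfolding cm_def gam_def by simp

lemma psi_even: "even j \<Longrightarrow> psi1 a b j x = Phi j x"
  unfolding psi1_def by simp

lemma psi_odd: assumes x: "x \<in> {-1<..<1}"
  shows "psi1 a b (Suc (2*i)) x = cm (2*i) * Phi (2*i-1) x - cc (2*i) * Phi (2*i+1) x"
  unfolding psi1_def using DERIV_imp_deriv[OF OP_deriv[OF x, of "2*i"]] by simp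

lemma psi_odd_deriv: assumes x: "x \<in> {-1<..<1}"
  shows "(OP (2*i) has_real_derivative psi1 a b (Suc (2*i)) x) (at x)"
  unfolding psi_odd[OF x] by (rule OP_deriv[OF x])

lemma psi_odd_int: "psi1 a b (Suc (2*i)) integrable_on {-1..1}"
  by (rule eps_FTC(1)[OF OP_cont OP_end(2) OP_end(1) psi_odd_deriv])

lemma eps_psi_odd: "x \<in> {-1..1} \<Longrightarrow> eps_op (psi1 a b (Suc (2*i))) x = OP (2*i) x"
  by (rule eps_FTC(2)[OF OP_cont OP_end(2) OP_end(1) psi_odd_deriv])

lemma Phi_eps_int: "(\<lambda>x. Phi j x * eps_op (Phi k) x) integrable_on {-1..1}"
  by (rule Phi_times_int[OF eps_cont[OF Phi_int]])

lemma OPPhi_int: "(\<lambda>x. OP k x * Phi j x) integrable_on {-1..1}"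
  using orthonormal(1)[of j k] by (simp add: mult.commute)

lemma int_OPPhi: "integral {-1..1} (\<lambda>x. OP k x * Phi j x) = (if j = k then 1 else 0)"
  using int_PhiOP[of j k] by (simp add: mult.commute)

definition A where "A i l = integral {-1..1} (\<lambda>x. Phi (2*i) x * eps_op (Phi (2*l)) x)"

lemma epsrel: assumes x: "x \<in> {-1..1}"
  shows "cm (2*k+1) * eps_op (Phi (2*k)) x - cc (2*k+1) * eps_op (Phi (2*k+2)) x = OP (2*k+1) x"
proof -
  have d: "(OP (2*k+1) has_real_derivative (cm (2*k+1) * Phi (2*k) y + (- cc (2*k+1)) * Phi (2*k+2) y)) (at y)"
    if "y \<in> {-1<..<1}" for y
    using OP_deriv[OF that, of "2*k+1"] by simp
  have "eps_op (\<lambda>y. cm (2*k+1) * Phi (2*k) y + (- cc (2*k+1)) * Phi (2*k+2) y) x = OP (2*k+1) x"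
    by (rule eps_FTC(2)[OF OP_cont OP_end(2) OP_end(1) d x])
  then show ?thesis unfolding eps_lin[OF Phi_int Phi_int x] by simp
qed

lemma A_step: "cc (2*k+1) * A i (Suc k) = cm (2*k+1) * A i k"
proof -
  have e: "Phi (2*i) x * (cc (2*k+1) * eps_op (Phi (2*Suc k)) x)
      = cm (2*k+1) * (Phi (2*i) x * eps_op (Phi (2*k)) x) - Phi (2*i) x * OP (2*k+1) x"
    if "x \<in> {-1..1}" for x
  proof -
    have i2: "2 * Suc k = 2*k+2" by simp
    have r: "cc (2*k+1) * eps_op (Phi (2*Suc k)) x = cm (2*k+1) * eps_op (Phi (2*k)) x - OP (2*k+1) x"
      unfolding i2 using epsrel[OF that, of k] by linarith
    show ?thesis unfolding r by algebra
  qed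
  have "cc (2*k+1) * A i (Suc k) = integral {-1..1} (\<lambda>x. Phi (2*i) x * (cc (2*k+1) * eps_op (Phi (2*Suc k)) x))"
  proof -
    have "(\<lambda>x. Phi (2*i) x * (cc (2*k+1) * eps_op (Phi (2*Suc k)) x)) = (\<lambda>x. cc (2*k+1) * (Phi (2*i) x * eps_op (Phi (2*Suc k)) x))"
      by (rule ext) algebra
    then show ?thesis unfolding A_def by simp
  qed
  also have "\<dots> = integral {-1..1} (\<lambda>x. cm (2*k+1) * (Phi (2*i) x * eps_op (Phi (2*k)) x) - Phi (2*i) x * OP (2*k+1) x)"
    by (rule integral_cong) (rule e)
  also have "\<dots> = cm (2*k+1) * A i k - integral {-1..1} (\<lambda>x. Phi (2*i) x * OP (2*k+1) x)"
    unfolding A_def by (simp add: integral_diff integrable_on_mult_right Phi_eps_int orthonormal(1))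
  also have "integral {-1..1} (\<lambda>x. Phi (2*i) x * OP (2*k+1) x) = 0"
  proof -
    have "2 * i \<noteq> 2 * k + 1" by presburger
    then show ?thesis unfolding int_PhiOP by simp
  qed
  finally show ?thesis by simp
qed

lemma A0_step: "cm (2*k+1) * A k 0 = cc (2*k+1) * A (Suc k) 0"
proof -
  have d: "(OP (2*k+1) has_real_derivative (cm (2*k+1) * Phi (2*k) y - cc (2*k+1) * Phi (2*k+2) y)) (at y)"
    if "y \<in> {-1<..<1}" for y
    using OP_deriv[OF that, of "2*k+1"] by simp
  have "integral {-1..1} (\<lambda>x. (cm (2*k+1) * Phi (2*k) x - cc (2*k+1) * Phi (2*k+2) x) * eps_op (Phi 0) x)
     = - integral {-1..1} (\<lambda>x. OP (2*k+1) x * Phi 0 x)"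
    by (rule eps_ibp(2)[OF OP_cont OP_end(2) OP_end(1) d Phi_int Phi_cont OPPhi_int])
  also have "\<dots> = 0" unfolding int_OPPhi by simp
  finally have z: "integral {-1..1} (\<lambda>x. (cm (2*k+1) * Phi (2*k) x - cc (2*k+1) * Phi (2*k+2) x) * eps_op (Phi 0) x) = 0" .
  have "integral {-1..1} (\<lambda>x. (cm (2*k+1) * Phi (2*k) x - cc (2*k+1) * Phi (2*k+2) x) * eps_op (Phi 0) x)
     = integral {-1..1} (\<lambda>x. cm (2*k+1) * (Phi (2*k) x * eps_op (Phi 0) x) - cc (2*k+1) * (Phi (2*k+2) x * eps_op (Phi 0) x))"
    by (simp add: algebra_simps)
  also have "\<dots> = cm (2*k+1) * A k 0 - cc (2*k+1) * A (Suc k) 0"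
    unfolding A_def by (simp add: integral_diff integrable_on_mult_right Phi_eps_int)
  finally show ?thesis using z by simp
qed

lemma A00: "A 0 0 = 0"
  unfolding A_def using eps_self(2)[OF Phi_int Phi_cont] by simp

lemma A_zero: "A i l = 0"
proof -
  have a0: "A k 0 = 0" for k
  proof (induction k)
    case 0 then show ?case by (rule A00)
  next
    case (Suc k)
    then show ?case using A0_step[of k] cc_pos[of "2*k+1"] by simp
  qed
  show ?thesis
  proof (induction l)
    case 0 then show ?case by (rule a0)
  next
    case (Suc l)
    then show ?case using A_step[of l i] cc_pos[of "2*l+1"] by simp
  qed
qed

end

definition Jm :: "nat \<Rightarrow> nat \<Rightarrow> real" where
  "Jm j k = (if even j then (if k = j+1 then 1 else 0) else (if k+1 = j then -1 else 0))"

lemma Jm_row: "Jm j l = (if l = (if even j then j+1 else j-1) then (if even j then 1 else -1) else 0)"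
proof (cases "even j")
  case True then show ?thesis by (simp add: Jm_def)
next
  case False
  then have "j \<ge> 1" by (cases j) auto
  then have "(l + 1 = j) = (l = j - 1)" by auto
  then show ?thesis using False by (simp add: Jm_def)
qed

lemma Jm_col: "Jm l k = (if l = (if even k then k+1 else k-1) then (if even k then -1 else 1) else 0)"
proof (cases "even k")
  case True
  show ?thesis
  proof (cases "even l")
    case True
    have "k \<noteq> l + 1" "l \<noteq> k + 1" using \<open>even k\<close> True by presburger+
    then show ?thesis using True \<open>even k\<close> by (simp add: Jm_def)
  next
    case False
    then show ?thesis using \<open>even k\<close> by (auto simp: Jm_def)
  qed
next
  case False
  then have k1: "k \<ge> 1" by (cases k) auto
  show ?thesis
  proof (cases "even l")
    case True
    have "(k = l + 1) = (l = k - 1)" using k1 by auto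
    then show ?thesis using True False by (simp add: Jm_def)
  next
    case f2: False
    have "k + 1 \<noteq> l" "l \<noteq> k - 1" using False f2 k1 by presburger+
    then show ?thesis using f2 False by (simp add: Jm_def)
  qed
qed

lemma sum_even_odd: fixes m :: nat and F :: "nat \<Rightarrow> real" shows "(\<Sum>j<2*m. F j) = (\<Sum>i<m. F (2*i) + F (2*i+1))"
  by (induction m) (simp_all add: sum.distrib)

lemma sum_shift: fixes m :: nat shows "m \<ge> 1 \<Longrightarrow> (\<Sum>i<m. (if i = 0 then 0 else f (i-1))) + f (m-1) = (\<Sum>i<m. f i :: real)"
proof (induction m)
  case 0 then show ?case by simp
next
  case (Suc m)
  show ?case
  proof (cases "m = 0")
    case True then show ?thesis by simp
  next
    case False
    then have "(\<Sum>i<m. (if i = 0 then 0 else f (i-1))) + f (m-1) = (\<Sum>i<m. f i)" using Suc by simp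
    then show ?thesis using False by simp
  qed
qed

lemma sum_delta_mult: fixes p N :: nat shows "p < N \<Longrightarrow> (\<Sum>l<N. (if l = p then c else 0) * X l) = c * (X p :: real)"
proof -
  assume "p < N"
  have "(\<Sum>l<N. (if l = p then c else 0) * X l) = (\<Sum>l<N. (if l = p then c * X p else 0))"
    by (rule sum.cong) auto
  also have "\<dots> = c * X p" using \<open>p < N\<close> by (subst sum.delta) simp_all
  finally show ?thesis .
qed

context
  fixes a b :: real assumes ab: "a > -2" "b > -2"
begin

abbreviation Phi' where "Phi' j \<equiv> phi1 a b j"

lemma M_even_odd: "M1 a b (2*i) (Suc (2*l)) = (if i = l then 1 else 0)"
proof -
  have "M1 a b (2*i) (Suc (2*l)) = integral {-1..1} (\<lambda>x. Phi' (2*i) x * ((1 - x^2) * Phi' (2*l) x))"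
    unfolding M1_def by (rule integral_cong) (simp only: psi_even[OF ab] eps_psi_odd[OF ab] even_mult_iff even_numeral simp_thms)
  also have "\<dots> = (if i = l then 1 else 0)" unfolding int_PhiOP[OF ab] by simp
  finally show ?thesis .
qed

lemma M_even_even: "M1 a b (2*i) (2*l) = 0"
proof -
  have e: "psi1 a b (2*l) = Phi' (2*l)" by (rule ext) (simp add: psi_even[OF ab])
  have "M1 a b (2*i) (2*l) = A a b i l"
    unfolding M1_def A_def[OF ab] e by (simp add: psi_even[OF ab])
  then show ?thesis using A_zero[OF ab] by simp
qed

lemma M_odd_odd: "M1 a b (Suc (2*i)) (Suc (2*l)) = 0"
proof -
  have "M1 a b (Suc (2*i)) (Suc (2*l)) = integral {-1..1} (\<lambda>x. psi1 a b (Suc (2*i)) x * ((1 - x^2) * Phi' (2*l) x))"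
    unfolding M1_def by (rule integral_cong) (simp add: eps_psi_odd[OF ab])
  also have "\<dots> = integral {-1..1} (\<lambda>x. cm a b (2*i) * (Phi' (2*i-1) x * ((1 - x^2) * Phi' (2*l) x))
        - cc a b (2*i) * (Phi' (2*i+1) x * ((1 - x^2) * Phi' (2*l) x)))"
  proof (rule integral_spike[of "{-1,1}"])
    show "negligible {-1,1::real}" by auto
    fix x :: real assume "x \<in> {-1..1} - {-1,1}"
    then have x: "x \<in> {-1<..<1}" by auto
    show "cm a b (2*i) * (Phi' (2*i-1) x * ((1 - x^2) * Phi' (2*l) x))
        - cc a b (2*i) * (Phi' (2*i+1) x * ((1 - x^2) * Phi' (2*l) x))
      = psi1 a b (Suc (2*i)) x * ((1 - x^2) * Phi' (2*l) x)"
      unfolding psi_odd[OF ab x] by (simp add: algebra_simps)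
  qed
  also have "\<dots> = cm a b (2*i) * (if 2*i-1 = 2*l then 1 else 0) - cc a b (2*i) * (if 2*i+1 = 2*l then 1 else 0)"
    by (simp add: integral_diff integrable_on_mult_right orthonormal(1)[OF ab] int_PhiOP[OF ab])
  also have "\<dots> = 0"
  proof (cases "i = 0")
    case True then show ?thesis by (simp add: cm0[OF ab])
  next
    case False
    then have "2*i-1 \<noteq> 2*l" "2*i+1 \<noteq> 2*l" by presburger+
    then show ?thesis by simp
  qed
  finally show ?thesis .
qed

lemma M_odd_even: "M1 a b (Suc (2*i)) (2*l) = (if i = l then -1 else 0)"
proof -
  have e: "psi1 a b (2*l) = Phi' (2*l)" by (rule ext) (simp add: psi_even[OF ab])
  have "M1 a b (Suc (2*i)) (2*l) = integral {-1..1} (\<lambda>x. psi1 a b (Suc (2*i)) x * eps_op (Phi' (2*l)) x)"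
    unfolding M1_def e ..
  also have "\<dots> = - integral {-1..1} (\<lambda>x. (1 - x^2) * Phi' (2*i) x * Phi' (2*l) x)"
    by (rule eps_ibp(2)[OF OP_cont[OF ab] OP_end(2)[OF ab] OP_end(1)[OF ab] psi_odd_deriv[OF ab]
          Phi_int[OF ab] Phi_cont[OF ab] OPPhi_int[OF ab]])
  also have "\<dots> = (if i = l then -1 else 0)" using int_OPPhi[OF ab, of "2*i" "2*l"] by auto
  finally show ?thesis .
qed

lemma M_val: "M1 a b j k = Jm j k"
proof -
  have "\<exists>i. j = 2*i \<or> j = Suc (2*i)" by presburger
  then obtain i where i: "j = 2*i \<or> j = Suc (2*i)" by blast
  have "\<exists>l. k = 2*l \<or> k = Suc (2*l)" by presburger
  then obtain l where l: "k = 2*l \<or> k = Suc (2*l)" by blast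
  show ?thesis
  proof (cases "j = 2*i")
    case True
    show ?thesis
    proof (cases "k = 2*l")
      case k: True
      have "2*l \<noteq> 2*i+1" by presburger
      then show ?thesis unfolding True k M_even_even Jm_def by simp
    next
      case k: False
      then have k: "k = Suc (2*l)" using l by simp
      show ?thesis unfolding True k M_even_odd Jm_def by simp
    qed
  next
    case False
    then have j: "j = Suc (2*i)" using i by simp
    show ?thesis
    proof (cases "k = 2*l")
      case k: True
      show ?thesis unfolding j k M_odd_even Jm_def by simp
    next
      case k: False
      then have k: "k = Suc (2*l)" using l by simp
      have "Suc (2*l) + 1 \<noteq> Suc (2*i)" by presburger
      then show ?thesis unfolding j k M_odd_odd Jm_def by simp
    qed
  qed
qed

lemma M_eq: "M1 a b = Jm" by (intro ext) (rule M_val)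

lemma p_lt: fixes N m j :: nat assumes "N = 2*m" "j < N" shows "(if even j then j+1 else j-1) < N"
  using assms by (cases "even j") (presburger, simp)

lemma inv_exists: assumes "N = 2*m" shows "is_inverse_mat N (M1 a b) (\<lambda>j k. - Jm j k)"
  unfolding is_inverse_mat_def M_eq
proof (intro conjI allI impI)
  fix j k assume j: "j < N" and k: "k < N"
  let ?p = "if even j then j+1 else j-1" and ?c = "if even j then 1 else -1 :: real"
  have "(\<Sum>l<N. Jm j l * - Jm l k) = (\<Sum>l<N. (if l = ?p then ?c else 0) * (- Jm l k))"
    by (subst Jm_row) simp
  also have "\<dots> = ?c * (- Jm ?p k)" by (rule sum_delta_mult[OF p_lt[OF assms j]])
  also have "\<dots> = (if j = k then 1 else 0)"
  proof (cases "even j")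
    case True
    then have "odd (j+1)" by simp
    then show ?thesis using True by (auto simp: Jm_def)
  next
    case False
    then have "j \<ge> 1" "even (j-1)" by (cases j; auto)+
    then show ?thesis using False by (auto simp: Jm_def)
  qed
  finally show "(\<Sum>l<N. Jm j l * - Jm l k) = (if j = k then 1 else 0)" .
  have "(\<Sum>l<N. - Jm j l * Jm l k) = (\<Sum>l<N. (if l = ?p then - ?c else 0) * Jm l k)"
    by (subst Jm_row) (intro sum.cong; simp)
  also have "\<dots> = (- ?c) * Jm ?p k" by (rule sum_delta_mult[OF p_lt[OF assms j]])
  also have "\<dots> = (if j = k then 1 else 0)"
  proof (cases "even j")
    case True
    then have "odd (j+1)" by simp
    then show ?thesis using True by (auto simp: Jm_def)
  next
    case False
    then have "j \<ge> 1" "even (j-1)" by (cases j; auto)+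
    then show ?thesis using False by (auto simp: Jm_def)
  qed
  finally show "(\<Sum>l<N. - Jm j l * Jm l k) = (if j = k then 1 else 0)" .
qed

lemma nu_unique: assumes N: "N = 2*m" and inv: "is_inverse_mat N (M1 a b) \<nu>" and j: "j < N" and k: "k < N"
  shows "\<nu> j k = - Jm j k"
proof -
  have col: "\<nu> j (if even q then q+1 else q-1) * (if even q then -1 else 1) = (if j = q then 1 else 0)"
    if q: "q < N" for q
  proof -
    have "(\<Sum>l<N. \<nu> j l * Jm l q) = (if j = q then 1 else 0)"
      using inv j q unfolding is_inverse_mat_def M_eq by blast
    moreover have "(\<Sum>l<N. \<nu> j l * Jm l q) = (\<Sum>l<N. (if l = (if even q then q+1 else q-1) then (if even q then -1 else 1) else 0) * \<nu> j l)"
      by (subst Jm_col) (intro sum.cong; simp)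
    moreover have "\<dots> = (if even q then -1 else 1) * \<nu> j (if even q then q+1 else q-1)"
      by (rule sum_delta_mult[OF p_lt[OF N q]])
    ultimately show ?thesis by (simp add: mult.commute)
  qed
  show ?thesis
  proof (cases "even k")
    case True
    then have q: "k + 1 < N" "odd (k+1)" using N k by presburger+
    have "\<nu> j k = (if j = k+1 then 1 else 0)" using col[OF q(1)] q(2) by simp
    moreover have "Jm j k = - (if j = k+1 then 1 else 0)" using True by (auto simp: Jm_def)
    ultimately show ?thesis by simp
  next
    case False
    then have k1: "k \<ge> 1" by (cases k) auto
    then have q: "k - 1 < N" "even (k-1)" using N k False by (presburger, presburger)
    have "\<nu> j k * (-1) = (if j = k-1 then 1 else 0)" using col[OF q(1)] q(2) k1 by simp
    moreover have "Jm j k = (if j = k-1 then 1 else 0)"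
    proof (cases "even j")
      case True then show ?thesis using k1 by (auto simp: Jm_def)
    next
      case f2: False
      then have "k + 1 \<noteq> j" "j \<noteq> k - 1" using False k1 by presburger+
      then show ?thesis using f2 by (simp add: Jm_def)
    qed
    ultimately show ?thesis by simp
  qed
qed

lemma K_eq:
  assumes N: "N = 2*m" and m: "m \<ge> 1" and x: "x \<in> {-1<..<1}" and y: "y \<in> {-1<..<1}"
    and nu: "\<And>j k. j < N \<Longrightarrow> k < N \<Longrightarrow> \<nu> j k = - Jm j k"
  shows "K1 a b N \<nu> x y = S1 a b N x y + C1 a b N * eps_op (Phi' N) x * Phi' (N-1) y"
proof -
  have x': "x \<in> {-1..1}" using x by auto
  define e where "e j = eps_op (Phi' j) x" for j
  define f where "f i = cc a b (2*i+1) * e (2*i+2) * Phi' (2*i+1) y" for i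
  define g where "g i = (if i = 0 then 0 else f (i-1))" for i
  define com where "com i = cc a b (2*i) * e (2*i) * Phi' (2*i+1) y + (1 - x^2) * Phi' (2*i) x * Phi' (2*i) y" for i
  define T where "T j = (if even j then -1 else 1) * (eps_op (psi1 a b j) x * psi1 a b (if even j then j+1 else j-1) y)" for j
  have "K1 a b N \<nu> x y = (\<Sum>j<N. T j)"
    unfolding K1_def
  proof (rule sum.cong[OF refl])
    fix j assume j: "j \<in> {..<N}"
    let ?p = "if even j then j+1 else j-1" and ?c = "if even j then 1 else -1 :: real"
    have "(\<Sum>k<N. \<nu> j k * eps_op (psi1 a b j) x * psi1 a b k y)
        = (\<Sum>k<N. (if k = ?p then - ?c else 0) * (eps_op (psi1 a b j) x * psi1 a b k y))"
    proof (rule sum.cong[OF refl])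
      fix k assume k: "k \<in> {..<N}"
      show "\<nu> j k * eps_op (psi1 a b j) x * psi1 a b k y = (if k = ?p then - ?c else 0) * (eps_op (psi1 a b j) x * psi1 a b k y)"
      proof -
        have nj: "\<nu> j k = - Jm j k" using nu[of j k] j k by simp
        show ?thesis unfolding nj by (subst Jm_row) auto
      qed
    qed
    also have "\<dots> = (- ?c) * (eps_op (psi1 a b j) x * psi1 a b ?p y)"
      by (rule sum_delta_mult[OF p_lt[OF N]]) (use j in simp)
    also have "\<dots> = T j" unfolding T_def by simp
    finally show "(\<Sum>k<N. \<nu> j k * eps_op (psi1 a b j) x * psi1 a b k y) = T j" .
  qed
  also have "\<dots> = (\<Sum>i<m. T (2*i) + T (2*i+1))" unfolding N by (rule sum_even_odd)
  also have "\<dots> = (\<Sum>i<m. com i - g i)"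
  proof (rule sum.cong[OF refl])
    fix i
    have t1: "T (2*i) = - (e (2*i) * (cm a b (2*i) * Phi' (2*i-1) y - cc a b (2*i) * Phi' (2*i+1) y))"
    proof -
      have "psi1 a b (2*i) = Phi' (2*i)" by (rule ext) (simp add: psi_even[OF ab])
      moreover have "psi1 a b (2*i+1) y = cm a b (2*i) * Phi' (2*i-1) y - cc a b (2*i) * Phi' (2*i+1) y"
        using psi_odd[OF ab y, of i] by simp
      ultimately show ?thesis unfolding T_def e_def by simp
    qed
    have t2: "T (2*i+1) = (1 - x^2) * Phi' (2*i) x * Phi' (2*i) y"
    proof -
      have "eps_op (psi1 a b (2*i+1)) x = (1 - x^2) * Phi' (2*i) x"
        using eps_psi_odd[OF ab x', of i] by simp
      moreover have "psi1 a b (2*i) y = Phi' (2*i) y" by (simp add: psi_even[OF ab])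
      ultimately show ?thesis unfolding T_def by simp
    qed
    have gi: "cm a b (2*i) * e (2*i) * Phi' (2*i-1) y = g i"
    proof (cases "i = 0")
      case True then show ?thesis unfolding g_def by (simp add: cm0[OF ab])
    next
      case False
      then have "2*i = Suc (2*(i-1)+1)" "2*i = 2*(i-1)+2" "2*i-1 = 2*(i-1)+1" by auto
      then have "cm a b (2*i) = cc a b (2*(i-1)+1)" using cm_cc[OF ab, of "2*(i-1)+1"] by metis
      then show ?thesis unfolding g_def f_def using False \<open>2*i = 2*(i-1)+2\<close> \<open>2*i-1 = 2*(i-1)+1\<close>
        by (simp add: mult.commute mult.left_commute)
    qed
    show "T (2*i) + T (2*i+1) = com i - g i"
      unfolding t1 t2 com_def gi[symmetric] by (simp add: algebra_simps)
  qed
  also have "\<dots> = (\<Sum>i<m. com i) - (\<Sum>i<m. g i)" by (rule sum_subtractf)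
  finally have K: "K1 a b N \<nu> x y = (\<Sum>i<m. com i) - (\<Sum>i<m. g i)" .
  have "S1 a b N x y = (\<Sum>i<m. (1 - x^2) * Phi' (2*i) x * Phi' (2*i) y + (1 - x^2) * Phi' (2*i+1) x * Phi' (2*i+1) y)"
    unfolding S1_def N by (rule sum_even_odd)
  also have "\<dots> = (\<Sum>i<m. com i - f i)"
  proof (rule sum.cong[OF refl])
    fix i
    have "(1 - x^2) * Phi' (2*i+1) x = cc a b (2*i) * e (2*i) - cc a b (2*i+1) * e (2*i+2)"
      using epsrel[OF ab x', of i] cm_cc[OF ab, of "2*i"] unfolding e_def by simp
    then show "(1 - x^2) * Phi' (2*i) x * Phi' (2*i) y + (1 - x^2) * Phi' (2*i+1) x * Phi' (2*i+1) y = com i - f i"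
      unfolding com_def f_def by algebra
  qed
  also have "\<dots> = (\<Sum>i<m. com i) - (\<Sum>i<m. f i)" by (rule sum_subtractf)
  finally have S: "S1 a b N x y = (\<Sum>i<m. com i) - (\<Sum>i<m. f i)" .
  have C: "C1 a b N * eps_op (Phi' N) x * Phi' (N-1) y = f (m-1)"
  proof -
    have "N \<ge> 2" using N m by simp
    have "C1 a b N = cc a b (N-1)" using cc_C[OF ab \<open>N \<ge> 2\<close>] by simp
    moreover have "N - 1 = 2*(m-1)+1" "N = 2*(m-1)+2" using N m by auto
    ultimately show ?thesis unfolding f_def e_def by (metis)
  qed
  have sh: "(\<Sum>i<m. g i) + f (m-1) = (\<Sum>i<m. f i)" unfolding g_def by (rule sum_shift[OF m])
  show ?thesis unfolding K S C using sh by simp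
qed

end

theorem lemma3:
  fixes a b :: real and N :: nat
  assumes "a > -2" and "b > -2" and "N \<ge> 2" and "even N"
  shows "(\<exists>\<nu>. is_inverse_mat N (M1 a b) \<nu>) \<and>
         (\<forall>\<nu>. is_inverse_mat N (M1 a b) \<nu> \<longrightarrow>
            (\<forall>x\<in>{-1<..<1}. \<forall>y\<in>{-1<..<1}.
               K1 a b N \<nu> x y
                 = S1 a b N x y + C1 a b N * eps_op (phi1 a b N) x * phi1 a b (N - 1) y))"
proof -
  obtain m where N: "N = 2*m" using assms(4) by (elim evenE)
  have m: "m \<ge> 1" using N assms(3) by simp
  show ?thesis
  proof (intro conjI allI impI ballI)
    show "\<exists>\<nu>. is_inverse_mat N (M1 a b) \<nu>" using inv_exists[OF assms(1,2) N] by blast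
  next
    fix \<nu> :: "nat \<Rightarrow> nat \<Rightarrow> real" and x y :: real assume inv: "is_inverse_mat N (M1 a b) \<nu>" and x: "x \<in> {-1<..<1}" and y: "y \<in> {-1<..<1}"
    show "K1 a b N \<nu> x y = S1 a b N x y + C1 a b N * eps_op (phi1 a b N) x * phi1 a b (N - 1) y"
      by (rule K_eq[OF assms(1,2) N m x y]) (rule nu_unique[OF assms(1,2) N inv])
  qed
qed

end
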